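(* Let $A\in\mathbb{R}^{n\times n}$ be symmetric positive semi-definite with eigendecomposition $A=U\Lambda U^\top$, where $U=[u_1,\ldots,u_n]$ is orthogonal and $\Lambda=\mathrm{diag}(\lambda_1,\ldots,\lambda_n)$ with $\lambda_1\ge\cdots\ge\lambda_n\ge0$ (so $\lambda_j=\lambda_j(A)$). Let $1\le k<n$, $U_1=[u_1,\ldots,u_k]$, $U_2=[u_{k+1},\ldots,u_n]$, and let $0\le\epsilon<1$. Suppose $Q\in\mathbb{R}^{n\times k}$ has orthonormal columns ($Q^\top Q=I_k$) and \[ Q=U_1+\epsilon^2U_1M+\epsilon U_2N \] for some $M\in\mathbb{R}^{k\times k}$, $N\in\mathbb{R}^{(n-k)\times k}$ with $\|M\|_2\le1$, $\|N\|_2\le1$. For $i=1,\ldots,k$ define \[ \alpha_i:=1-\frac{3\lambda_{k+1}+3\epsilon^2(\lambda_1-\lambda_{k+1})}{\lambda_i}. \] Then for each $i=1,\ldots,k$ with $\alpha_i>0$: \[ |\lambda_i-\sigma_i(AQ)|\le|\lambda_i-\lambda_i(Q^\top AQ)|\le C_{RR}\,\epsilon^2\lambda_1, \] \[ \bigl|\lambda_i-\lambda_i\bigl(AQ(Q^\top AQ)^{\dagger}(AQ)^\top\bigr)\bigr|\le C_{Nys,i}\bigl(\epsilon^2\lambda_{k+1}+\epsilon^4(\lambda_1-\lambda_{k+1})\bigr), \] where $C_{RR}:=2+\epsilon^2+\lambda_{k+1}/\lambda_1\le4$ and \[ C_{Nys,i}:=\left(\frac{\lambda_1(1+\epsilon^2)+\lambda_{k+1}\Bigl(1+\frac{\epsilon^2}{1+\sqrt{1-\epsilon^2}}\Bigr)}{\alpha_i\lambda_i}\right)^{2}.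 \]
   Context: $\|\cdot\|_2$ is the spectral norm. For a symmetric matrix $B$, $\lambda_i(B)$ denotes its $i$-th largest eigenvalue; $\sigma_i(B)$ denotes the $i$-th largest singular value of a matrix $B$; $B^{\dagger}$ is the Moore–Penrose pseudoinverse. The quantities $\lambda_i(Q^\top AQ)$, $\sigma_i(AQ)$ and $\lambda_i(AQ(Q^\top AQ)^{\dagger}(AQ)^\top)$ are the Rayleigh–Ritz, SVD-extract and Nyström eigenvalue estimates, respectively. (Implicitly $\lambda_1>0$ so that $C_{RR}$ is defined.) *)

theory Defs
  imports Complex_Main "Jordan_Normal_Form.Matrix"
begin

(* All matrices are real JNF matrices ('real mat'); matrix indices are 0-based,
   eigenvalue/singular-value indices are 1-based as in the paper. *)

definition sym_eig :: "real mat \<Rightarrow> nat \<Rightarrow> real" where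
  "sym_eig B = (SOME d.
     (\<forall>i j. 1 \<le> i \<longrightarrow> i \<le> j \<longrightarrow> j \<le> dim_row B \<longrightarrow> d j \<le> d i) \<and>
     (\<exists>V \<in> carrier_mat (dim_row B) (dim_row B).
        transpose_mat V * V = 1\<^sub>m (dim_row B) \<and>
        B = V * mat_diag (dim_row B) (\<lambda>j. d (j + 1)) * transpose_mat V))"

definition sing_val :: "real mat \<Rightarrow> nat \<Rightarrow> real" where
  "sing_val B i = sqrt (sym_eig (transpose_mat B * B) i)"

definition spec_norm :: "real mat \<Rightarrow> real" where
  "spec_norm B = Sup {sqrt ((B *\<^sub>v v) \<bullet> (B *\<^sub>v v)) | v.
                       v \<in> carrier_vec (dim_col B) \<and> v \<bullet> v = 1}"

definition pinv :: "real mat \<Rightarrow> real mat" where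
  "pinv B = (SOME X. X \<in> carrier_mat (dim_col B) (dim_row B) \<and>
                     B * X * B = B \<and> X * B * X = X \<and>
                     transpose_mat (B * X) = B * X \<and>
                     transpose_mat (X * B) = X * B)"

end

theory Submission
  imports Defs "Jordan_Normal_Form.Spectral_Radius"
begin
lemma mult_entry:
  assumes "A \<in> carrier_mat r m" "B \<in> carrier_mat m c" "i < r" "j < c"
  shows "(A * B) $$ (i,j) = (\<Sum>k\<in>{0..<m}. A $$ (i,k) * B $$ (k,j))"
  using assms by (simp add: scalar_prod_def)

lemma mv_entry:
  assumes "A \<in> carrier_mat r m" "v \<in> carrier_vec m" "i < r"
  shows "(A *\<^sub>v v) $ i = (\<Sum>k\<in>{0..<m}. A $$ (i,k) * v $ k)"
  using assms by (simp add: scalar_prod_def)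

lemma real_sym_eigenvalue_exists:
  fixes A :: "real mat"
  assumes A: "A \<in> carrier_mat n n" and sym: "transpose_mat A = A" and n: "0 < n"
  shows "\<exists>e. eigenvalue A e"
proof -
  let ?Ac = "map_mat complex_of_real A"
  have Ac: "?Ac \<in> carrier_mat n n" using A by auto
  from spectrum_non_empty[OF Ac n] obtain \<mu> where "eigenvalue ?Ac \<mu>"
    unfolding spectrum_def by auto
  then obtain v where v: "v \<in> carrier_vec n" "v \<noteq> 0\<^sub>v n" and Av: "?Ac *\<^sub>v v = \<mu> \<cdot>\<^sub>v v"
    unfolding eigenvalue_def eigenvector_def using Ac by auto
  have symA: "\<And>i j. i<n \<Longrightarrow> j<n \<Longrightarrow> A$$(i,j) = A$$(j,i)"
    using sym A by (metis carrier_matD(1) carrier_matD(2) index_transpose_mat(1))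
  have entry: "(\<Sum>j\<in>{0..<n}. complex_of_real (A$$(i,j)) * v$j) = \<mu> * v$i" if i: "i < n" for i
  proof -
    have "(?Ac *\<^sub>v v)$i = \<mu> * v$i" using Av i v by simp
    moreover have "(?Ac *\<^sub>v v)$i = (\<Sum>j\<in>{0..<n}. complex_of_real (A$$(i,j)) * v$j)"
      using i A v mv_entry[OF Ac v(1) i] by simp
    ultimately show ?thesis by simp
  qed
  define S where "S = (\<Sum>i\<in>{0..<n}. \<Sum>j\<in>{0..<n}. cnj (v$i) * complex_of_real (A$$(i,j)) * v$j)"
  define r where "r = (\<Sum>i\<in>{0..<n}. cnj (v$i) * v$i)"
  have S1: "S = \<mu> * r"
  proof -
    have "S = (\<Sum>i\<in>{0..<n}. cnj (v$i) * (\<Sum>j\<in>{0..<n}. complex_of_real (A$$(i,j)) * v$j))"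
      unfolding S_def by (simp add: sum_distrib_left mult.assoc)
    also have "\<dots> = (\<Sum>i\<in>{0..<n}. cnj (v$i) * (\<mu> * v$i))"
      by (rule sum.cong, auto simp: entry)
    also have "\<dots> = \<mu> * r" unfolding r_def by (simp add: sum_distrib_left algebra_simps)
    finally show ?thesis .
  qed
  have S2: "cnj S = S"
  proof -
    have "cnj S = (\<Sum>i\<in>{0..<n}. \<Sum>j\<in>{0..<n}. v$i * complex_of_real (A$$(i,j)) * cnj (v$j))"
      unfolding S_def by (simp add: cnj_sum)
    also have "\<dots> = (\<Sum>j\<in>{0..<n}. \<Sum>i\<in>{0..<n}. v$i * complex_of_real (A$$(i,j)) * cnj (v$j))"
      by (rule sum.swap)
    also have "\<dots> = S" unfolding S_def
      by (rule sum.cong[OF refl], rule sum.cong[OF refl], auto simp: symA algebra_simps)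
    finally show ?thesis .
  qed
  have rreal: "r = complex_of_real (\<Sum>i\<in>{0..<n}. (cmod (v$i))^2)"
  proof -
    have "\<And>z. cnj z * z = complex_of_real ((cmod z)^2)" by (metis complex_norm_square mult.commute)
    thus ?thesis unfolding r_def of_real_sum by simp
  qed
  obtain i0 where i0: "i0 < n" "v$i0 \<noteq> 0" using v by (metis eq_vecI carrier_vecD index_zero_vec(1) index_zero_vec(2))
  have "(\<Sum>i\<in>{0..<n}. (cmod (v$i))^2) > 0"
  proof -
    have "(\<Sum>i\<in>{0..<n}. (cmod (v$i))^2) \<ge> (cmod (v$i0))^2"
      by (rule member_le_sum, insert i0, auto)
    moreover have "(cmod (v$i0))^2 > 0" using i0 by simp
    ultimately show ?thesis by linarith
  qed
  hence r0: "r \<noteq> 0" unfolding rreal by (metis of_real_eq_0_iff order_less_irrefl)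
  have cr: "cnj r = r" unfolding rreal by simp
  have "cnj \<mu> * r = \<mu> * r" using S1 S2 cr by (metis complex_cnj_mult)
  hence cmu: "cnj \<mu> = \<mu>" using r0 by simp
  hence Im0: "Im \<mu> = 0" by (metis Reals_cnj_iff complex_is_Real_iff)
  define a where "a = vec n (\<lambda>i. Re (v$i))"
  define b where "b = vec n (\<lambda>i. Im (v$i))"
  have a: "a \<in> carrier_vec n" and b: "b \<in> carrier_vec n" unfolding a_def b_def by auto
  have Aa: "A *\<^sub>v a = Re \<mu> \<cdot>\<^sub>v a"
  proof (rule eq_vecI)
    fix i assume "i < dim_vec (Re \<mu> \<cdot>\<^sub>v a)"
    hence i: "i < n" using a by simp
    have "(A *\<^sub>v a) $ i = (\<Sum>j\<in>{0..<n}. A$$(i,j) * Re (v$j))"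
      using mv_entry[OF A a i] unfolding a_def by simp
    also have "\<dots> = Re (\<Sum>j\<in>{0..<n}. complex_of_real (A$$(i,j)) * v$j)"
      by (simp add: Re_sum)
    also have "\<dots> = Re \<mu> * Re (v$i)" using entry[OF i] Im0 by simp
    finally show "(A *\<^sub>v a) $ i = (Re \<mu> \<cdot>\<^sub>v a) $ i" using i unfolding a_def by simp
  qed (insert A a, auto)
  have Ab: "A *\<^sub>v b = Re \<mu> \<cdot>\<^sub>v b"
  proof (rule eq_vecI)
    fix i assume "i < dim_vec (Re \<mu> \<cdot>\<^sub>v b)"
    hence i: "i < n" using b by simp
    have "(A *\<^sub>v b) $ i = (\<Sum>j\<in>{0..<n}. A$$(i,j) * Im (v$j))"
      using mv_entry[OF A b i] unfolding b_def by simp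
    also have "\<dots> = Im (\<Sum>j\<in>{0..<n}. complex_of_real (A$$(i,j)) * v$j)"
      by (simp add: Im_sum)
    also have "\<dots> = Re \<mu> * Im (v$i)" using entry[OF i] Im0 by simp
    finally show "(A *\<^sub>v b) $ i = (Re \<mu> \<cdot>\<^sub>v b) $ i" using i unfolding b_def by simp
  qed (insert A b, auto)
  have "a \<noteq> 0\<^sub>v n \<or> b \<noteq> 0\<^sub>v n"
  proof (rule ccontr)
    assume "\<not> ?thesis"
    hence "a $ i0 = 0" "b $ i0 = 0" using i0 by auto
    hence "v $ i0 = 0" unfolding a_def b_def using i0 by (simp add: complex_eq_iff)
    thus False using i0 by simp
  qed
  thus ?thesis unfolding eigenvalue_def eigenvector_def using A a b Aa Ab by auto
qed

lemma householder:
  fixes u :: "real vec"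
  assumes u: "u \<in> carrier_vec n" and uu: "u \<bullet> u = 1" and n: "0 < n" and u0: "u$0 \<le> 0"
  shows "\<exists>H. H \<in> carrier_mat n n \<and> transpose_mat H = H \<and> H * H = 1\<^sub>m n \<and> (\<forall>i<n. H$$(i,0) = u$i)"
proof -
  define w where "w = (\<lambda>i. (if i = 0 then 1 else 0) - u$i)"
  define s where "s = (\<Sum>i\<in>{0..<n}. w i * w i)"
  have uu': "(\<Sum>i\<in>{0..<n}. u$i * u$i) = 1" using uu u by (simp add: scalar_prod_def)
  have s: "s = 2 - 2 * u$0"
  proof -
    have "s = (\<Sum>i\<in>{0..<n}. (if i = 0 then 1 - 2*u$i else 0) + u$i*u$i)"
      unfolding s_def w_def by (rule sum.cong, auto simp: algebra_simps)
    also have "\<dots> = (1 - 2 * u$0) + 1" using n by (simp add: sum.distrib uu')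
    finally show ?thesis by simp
  qed
  have spos: "s > 0" using u0 s by linarith
  define H where "H = mat n n (\<lambda>(i,j). (if i = j then 1 else 0) - 2 * w i * w j / s)"
  have H: "H \<in> carrier_mat n n" unfolding H_def by simp
  have Ht: "transpose_mat H = H" unfolding H_def by (rule eq_matI, auto simp: mult.commute)
  have HH: "H * H = 1\<^sub>m n"
  proof (rule eq_matI)
    fix i j assume "i < dim_row (1\<^sub>m n)" "j < dim_col (1\<^sub>m n)"
    hence i: "i < n" and j: "j < n" by auto
    have e1: "(\<Sum>k\<in>{0..<n}. (if i = k then 1 else 0) * (if k = j then 1 else 0)) = (if i = j then 1 else (0::real))"
      using i j by (simp add: if_distrib cong: if_cong)
    have e2: "(\<Sum>k\<in>{0..<n}. (if i = k then 2 * w k * w j / s else 0)) = 2 * w i * w j / s"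
      using i by simp
    have e3: "(\<Sum>k\<in>{0..<n}. (if k = j then 2 * w i * w k / s else 0)) = 2 * w i * w j / s"
      using j by simp
    have e4: "(\<Sum>k\<in>{0..<n}. (4 * w i * w j / (s*s)) * (w k * w k)) = (4 * w i * w j / (s*s)) * s"
      unfolding s_def by (simp add: sum_distrib_left)
    have "(H * H) $$ (i,j) = (\<Sum>k\<in>{0..<n}. ((if i = k then 1 else 0) - 2 * w i * w k / s) *
        ((if k = j then 1 else 0) - 2 * w k * w j / s))"
      using mult_entry[OF H H i j] i j unfolding H_def by simp
    also have "\<dots> = (\<Sum>k\<in>{0..<n}. (if i = k then 1 else 0) * (if k = j then 1 else 0)
       - (if i = k then 2 * w k * w j / s else 0)
       - (if k = j then 2 * w i * w k / s else 0)
       + (4 * w i * w j / (s*s)) * (w k * w k))"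
      by (rule sum.cong[OF refl]) (insert spos, auto simp: field_simps)
    also have "\<dots> = (\<Sum>k\<in>{0..<n}. (if i = k then 1 else 0) * (if k = j then 1 else 0))
       - (\<Sum>k\<in>{0..<n}. (if i = k then 2 * w k * w j / s else 0))
       - (\<Sum>k\<in>{0..<n}. (if k = j then 2 * w i * w k / s else 0))
       + (\<Sum>k\<in>{0..<n}. (4 * w i * w j / (s*s)) * (w k * w k))"
      by (simp only: sum.distrib sum_subtractf)
    also have "\<dots> = (if i = j then 1 else 0)" unfolding e1 e2 e3 e4 using spos by (simp add: field_simps)
    finally show "(H * H) $$ (i,j) = 1\<^sub>m n $$ (i,j)" using i j by simp
  qed (insert H, auto)
  have col: "\<forall>i<n. H$$(i,0) = u$i"
  proof (intro allI impI)
    fix i assume i: "i < n"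
    have "H$$(i,0) = (if i = 0 then 1 else 0) - 2 * w i * (1 - u$0) / (2 - 2 * u$0)"
      using i n unfolding H_def s by (simp add: w_def)
    also have "\<dots> = (if i = 0 then 1 else 0) - w i" using u0 by (simp add: field_simps)
    also have "\<dots> = u$i" unfolding w_def by simp
    finally show "H$$(i,0) = u$i" .
  qed
  show ?thesis using H Ht HH col by blast
qed

lemma self_sp_nonneg: "0 \<le> (v::real vec) \<bullet> v"
  unfolding scalar_prod_def by (rule sum_nonneg) simp

lemma self_sp_pos: assumes "(v::real vec) \<in> carrier_vec n" "v \<noteq> 0\<^sub>v n" shows "0 < v \<bullet> v"
proof -
  obtain i where i: "i < n" "v$i \<noteq> 0" using assms by (metis eq_vecI carrier_vecD index_zero_vec(1) index_zero_vec(2))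
  have "v$i * v$i \<le> v \<bullet> v" unfolding scalar_prod_def
    by (rule member_le_sum, insert i assms, auto)
  moreover have "v$i * v$i > 0" using i(2) by (metis not_real_square_gt_zero)
  ultimately show ?thesis by linarith
qed

lemma diag_entry:
  assumes X: "X \<in> carrier_mat r n" and Y: "Y \<in> carrier_mat s n" and i: "i < r" and j: "j < s"
  shows "(X * mat_diag n d * transpose_mat Y) $$ (i,j) = (\<Sum>k\<in>{0..<n}. X$$(i,k) * d k * Y$$(j,k))"
proof -
  have XD: "X * mat_diag n d = mat r n (\<lambda>(i,k). X$$(i,k) * d k)"
    by (rule mat_diag_mult_right[OF X])
  have "(X * mat_diag n d * transpose_mat Y) $$ (i,j) = (\<Sum>k\<in>{0..<n}. (X * mat_diag n d)$$(i,k) * (transpose_mat Y)$$(k,j))"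
    by (rule mult_entry[of _ r n _ s], insert X Y i j, auto simp: XD)
  also have "\<dots> = (\<Sum>k\<in>{0..<n}. X$$(i,k) * d k * Y$$(j,k))"
    by (rule sum.cong, insert X Y i j, auto simp: XD)
  finally show ?thesis .
qed

lemma tt_entry:
  assumes X: "X \<in> carrier_mat n r" and Y: "Y \<in> carrier_mat n s" and i: "i < r" and j: "j < s"
  shows "(transpose_mat X * Y) $$ (i,j) = (\<Sum>k\<in>{0..<n}. X$$(k,i) * Y$$(k,j))"
  using mult_entry[of "transpose_mat X" r n Y s i j] assms by simp

lemma decomp_eigen:
  fixes A V :: "real mat"
  assumes V: "V \<in> carrier_mat n n" and VV: "transpose_mat V * V = 1\<^sub>m n"
    and A: "A = V * mat_diag n d * transpose_mat V" and j: "j < n"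
  shows "eigenvalue A (d j)"
proof -
  let ?x = "col V j"
  have x: "?x \<in> carrier_vec n" using V by auto
  have Vx: "transpose_mat V *\<^sub>v ?x = unit_vec n j"
    using col_mult2[of "transpose_mat V" n n V n j] V j VV by simp
  have Du: "mat_diag n d *\<^sub>v unit_vec n j = d j \<cdot>\<^sub>v unit_vec n j"
  proof (rule eq_vecI)
    fix i assume "i < dim_vec (d j \<cdot>\<^sub>v unit_vec n j)"
    hence i: "i < n" by simp
    show "(mat_diag n d *\<^sub>v unit_vec n j) $ i = (d j \<cdot>\<^sub>v unit_vec n j) $ i"
      using mv_entry[of "mat_diag n d" n n "unit_vec n j" i] i j
      by (simp add: mat_diag_def unit_vec_def if_distrib cong: if_cong)
  qed (simp add: mat_diag_def)
  have Vu: "V *\<^sub>v unit_vec n j = ?x"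
    using col_mult2[of V n n "1\<^sub>m n" n j] V j by simp
  have "A *\<^sub>v ?x = V *\<^sub>v (mat_diag n d *\<^sub>v (transpose_mat V *\<^sub>v ?x))"
    unfolding A using V x by (simp add: assoc_mult_mat_vec[of _ n n _ n])
  also have "\<dots> = d j \<cdot>\<^sub>v ?x" unfolding Vx Du using V mult_mat_vec[OF V] Vu by simp
  finally have Ax: "A *\<^sub>v ?x = d j \<cdot>\<^sub>v ?x" .
  have "?x \<bullet> ?x = (transpose_mat V * V) $$ (j,j)" using V j by simp
  hence "?x \<bullet> ?x = 1" using VV j by simp
  hence "?x \<noteq> 0\<^sub>v n" by auto
  moreover have "A \<in> carrier_mat n n" unfolding A using V by (metis mat_diag_dim mult_carrier_mat transpose_carrier_mat)
  ultimately show ?thesis unfolding eigenvalue_def eigenvector_def using x Ax by auto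
qed

lemma spectral_sorted:
  fixes A :: "real mat"
  assumes "A \<in> carrier_mat n n" "transpose_mat A = A"
  shows "\<exists>d V. V \<in> carrier_mat n n \<and> transpose_mat V * V = 1\<^sub>m n \<and>
     A = V * mat_diag n d * transpose_mat V \<and> (\<forall>i j. i \<le> j \<longrightarrow> j < n \<longrightarrow> d j \<le> d i)"
  using assms
proof (induction n arbitrary: A)
  case 0
  have "A = 1\<^sub>m 0 * mat_diag 0 (\<lambda>_. 0) * transpose_mat (1\<^sub>m 0)"
    by (rule eq_matI, insert 0, auto)
  thus ?case by (intro exI[of _ "\<lambda>_. 0"] exI[of _ "1\<^sub>m 0"], auto)
next
  case (Suc m)
  define n where "n = Suc m"
  have A: "A \<in> carrier_mat n n" and sym: "transpose_mat A = A" using Suc.prems n_def by auto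
  have n0: "0 < n" unfolding n_def by simp
  obtain e0 where "eigenvalue A e0" using real_sym_eigenvalue_exists[OF A sym n0] by blast
  have fin: "finite (spectrum A)" using card_finite_spectrum(1)[OF A] .
  have ne: "spectrum A \<noteq> {}" using \<open>eigenvalue A e0\<close> unfolding spectrum_def by auto
  define lam where "lam = Max (spectrum A)"
  have "lam \<in> spectrum A" unfolding lam_def using Max_in[OF fin ne] .
  hence "eigenvalue A lam" unfolding spectrum_def by simp
  then obtain v where v: "v \<in> carrier_vec n" "v \<noteq> 0\<^sub>v n" and Av: "A *\<^sub>v v = lam \<cdot>\<^sub>v v"
    unfolding eigenvalue_def eigenvector_def using A by auto
  have maxle: "e \<le> lam" if "eigenvalue A e" for e
    unfolding lam_def using Max_ge[OF fin] that unfolding spectrum_def by auto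
  have vv: "0 < v \<bullet> v" using self_sp_pos[OF v] .
  define c where "c = (if v$0 \<le> 0 then 1 else -1) / sqrt (v \<bullet> v)"
  define u where "u = c \<cdot>\<^sub>v v"
  have u: "u \<in> carrier_vec n" unfolding u_def using v by simp
  have uu: "u \<bullet> u = 1"
  proof -
    have "u \<bullet> u = c * c * (v \<bullet> v)" unfolding u_def using v by simp
    also have "c * c = 1 / (v \<bullet> v)" unfolding c_def using vv
      by (simp add: field_simps)
    finally show ?thesis using vv by simp
  qed
  have u0: "u$0 \<le> 0"
  proof -
    have "u$0 = c * v$0" unfolding u_def using v n0 by simp
    thus ?thesis unfolding c_def using vv
      by (auto simp: divide_le_0_iff mult_le_0_iff)
  qed
  have Au: "A *\<^sub>v u = lam \<cdot>\<^sub>v u"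
    unfolding u_def using mult_mat_vec[OF A v(1), of c] Av
    by (metis mult.commute smult_smult_assoc)
  obtain H where H: "H \<in> carrier_mat n n" and Ht: "transpose_mat H = H" and HH: "H * H = 1\<^sub>m n"
    and Hcol: "\<forall>i<n. H$$(i,0) = u$i"
    using householder[OF u uu n0 u0] by blast
  define C where "C = H * A * H"
  have C: "C \<in> carrier_mat n n" unfolding C_def using H A by (metis mult_carrier_mat)
  have Ct: "transpose_mat C = C"
  proof -
    have HA: "H * A \<in> carrier_mat n n" using H A by (metis mult_carrier_mat)
    have "transpose_mat C = transpose_mat H * transpose_mat (H * A)"
      unfolding C_def using transpose_mult[OF HA H] .
    also have "\<dots> = H * (A * H)" using transpose_mult[OF H A] Ht sym by simp
    also have "\<dots> = C" unfolding C_def using H A by simp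
    finally show ?thesis .
  qed
  have Hu: "H *\<^sub>v u = unit_vec n 0"
  proof (rule eq_vecI)
    fix i assume "i < dim_vec (unit_vec n 0)"
    hence i: "i < n" by simp
    have "(H *\<^sub>v u) $ i = (\<Sum>k\<in>{0..<n}. H$$(i,k) * H$$(k,0))"
      using mv_entry[OF H u i] Hcol by simp
    also have "\<dots> = (H * H) $$ (i,0)" using mult_entry[OF H H i n0] by simp
    finally show "(H *\<^sub>v u) $ i = unit_vec n 0 $ i" using HH i n0 by simp
  qed (insert H, simp)
  have Ccol: "C$$(i,0) = (if i = 0 then lam else 0)" if i: "i < n" for i
  proof -
    have HA: "H * A \<in> carrier_mat n n" using H A by (metis mult_carrier_mat)
    have "C$$(i,0) = (\<Sum>k\<in>{0..<n}. (H*A)$$(i,k) * u$k)"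
      unfolding C_def using mult_entry[OF HA H i n0] Hcol by simp
    also have "\<dots> = ((H * A) *\<^sub>v u) $ i" using mv_entry[OF HA u i] by simp
    also have "\<dots> = (H *\<^sub>v (lam \<cdot>\<^sub>v u)) $ i" using H A u Au by simp
    also have "\<dots> = lam * (H *\<^sub>v u) $ i" using mult_mat_vec[OF H u] i H by simp
    finally show ?thesis unfolding Hu using i by simp
  qed
  have Crow: "C$$(0,j) = (if j = 0 then lam else 0)" if j: "j < n" for j
  proof -
    have "C$$(0,j) = (transpose_mat C)$$(0,j)" using Ct by simp
    also have "\<dots> = C$$(j,0)" using C j n0 by simp
    finally show ?thesis using Ccol[OF j] by simp
  qed
  define A' where "A' = mat m m (\<lambda>(i,j). C$$(Suc i, Suc j))"
  have A': "A' \<in> carrier_mat m m" unfolding A'_def by simp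
  have A't: "transpose_mat A' = A'"
  proof (rule eq_matI)
    fix i j assume "i < dim_row A'" "j < dim_col A'"
    hence i: "i < m" and j: "j < m" unfolding A'_def by auto
    have "C$$(Suc j, Suc i) = (transpose_mat C)$$(Suc i, Suc j)" using C i j n_def by simp
    thus "transpose_mat A' $$ (i, j) = A' $$ (i, j)" unfolding A'_def using i j Ct by simp
  qed (auto simp: A'_def)
  from Suc.IH[OF A' A't] obtain d' V' where V': "V' \<in> carrier_mat m m"
    and V'V': "transpose_mat V' * V' = 1\<^sub>m m" and A'dec: "A' = V' * mat_diag m d' * transpose_mat V'"
    and d'sort: "\<forall>i j. i \<le> j \<longrightarrow> j < m \<longrightarrow> d' j \<le> d' i" by blast
  define W where "W = mat n n (\<lambda>(i,j). if i = 0 then (if j = 0 then 1 else 0)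
        else if j = 0 then 0 else V'$$(i-1,j-1))"
  define d where "d = (\<lambda>j. if j = 0 then lam else d' (j-1))"
  have W: "W \<in> carrier_mat n n" unfolding W_def by simp
  have WW: "transpose_mat W * W = 1\<^sub>m n"
  proof (rule eq_matI)
    fix i j assume "i < dim_row (1\<^sub>m n)" "j < dim_col (1\<^sub>m n)"
    hence i: "i < n" and j: "j < n" by auto
    have "(transpose_mat W * W) $$ (i,j) = (\<Sum>k\<in>{0..<n}. W$$(k,i) * W$$(k,j))"
      by (rule tt_entry[OF W W i j])
    also have "\<dots> = W$$(0,i) * W$$(0,j) + (\<Sum>k\<in>{0..<m}. W$$(Suc k,i) * W$$(Suc k,j))"
      unfolding n_def by (subst sum.atLeast0_lessThan_Suc_shift, simp)
    also have "\<dots> = (if i = j then 1 else 0)"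
    proof (cases i)
      case 0
      thus ?thesis unfolding W_def using i j n_def by auto
    next
      case (Suc i')
      show ?thesis
      proof (cases j)
        case 0
        thus ?thesis unfolding W_def using i j n_def Suc by auto
      next
        case (Suc j')
        have "(\<Sum>k\<in>{0..<m}. W$$(Suc k,i) * W$$(Suc k,j)) = (\<Sum>k\<in>{0..<m}. V'$$(k,i') * V'$$(k,j'))"
          by (rule sum.cong, insert i j \<open>i = Suc i'\<close> Suc n_def, auto simp: W_def)
        also have "\<dots> = (transpose_mat V' * V') $$ (i',j')"
          using tt_entry[OF V' V', of i' j'] i j \<open>i = Suc i'\<close> Suc n_def by simp
        finally show ?thesis using V'V' i j \<open>i = Suc i'\<close> Suc n_def unfolding W_def by simp
      qed
    qed
    finally show "(transpose_mat W * W) $$ (i,j) = 1\<^sub>m n $$ (i,j)" using i j by simp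
  qed (insert W, auto)
  have CW: "C = W * mat_diag n d * transpose_mat W"
  proof (rule eq_matI)
    fix i j assume "i < dim_row (W * mat_diag n d * transpose_mat W)" "j < dim_col (W * mat_diag n d * transpose_mat W)"
    hence i: "i < n" and j: "j < n" using W by auto
    have "(W * mat_diag n d * transpose_mat W) $$ (i,j) = (\<Sum>k\<in>{0..<n}. W$$(i,k) * d k * W$$(j,k))"
      by (rule diag_entry[OF W W i j])
    also have "\<dots> = W$$(i,0) * d 0 * W$$(j,0) + (\<Sum>k\<in>{0..<m}. W$$(i,Suc k) * d (Suc k) * W$$(j,Suc k))"
      unfolding n_def by (subst sum.atLeast0_lessThan_Suc_shift, simp)
    also have "\<dots> = C$$(i,j)"
    proof (cases i)
      case 0
      thus ?thesis unfolding W_def d_def using i j n_def Crow[OF j] by auto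
    next
      case (Suc i')
      show ?thesis
      proof (cases j)
        case 0
        thus ?thesis unfolding W_def using i j n_def Suc Ccol[OF i] by auto
      next
        case (Suc j')
        have "(\<Sum>k\<in>{0..<m}. W$$(i,Suc k) * d (Suc k) * W$$(j,Suc k)) = (\<Sum>k\<in>{0..<m}. V'$$(i',k) * d' k * V'$$(j',k))"
          by (rule sum.cong, insert i j \<open>i = Suc i'\<close> Suc n_def, auto simp: W_def d_def)
        also have "\<dots> = A' $$ (i',j')"
          using diag_entry[OF V' V', of i' j' d'] A'dec i j \<open>i = Suc i'\<close> Suc n_def by simp
        also have "\<dots> = C$$(i,j)" unfolding A'_def using i j \<open>i = Suc i'\<close> Suc n_def by simp
        finally show ?thesis using i j \<open>i = Suc i'\<close> Suc n_def unfolding W_def by simp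
      qed
    qed
    finally show "C $$ (i,j) = (W * mat_diag n d * transpose_mat W) $$ (i,j)" by simp
  qed (insert C W, auto)
  define V where "V = H * W"
  have V: "V \<in> carrier_mat n n" unfolding V_def using H W by (metis mult_carrier_mat)
  have VtH: "transpose_mat V = transpose_mat W * H" unfolding V_def using transpose_mult[OF H W] Ht by simp
  have Wt: "transpose_mat W \<in> carrier_mat n n" using W by simp
  have D: "mat_diag n d \<in> carrier_mat n n" by simp
  have VV: "transpose_mat V * V = 1\<^sub>m n"
  proof -
    have "transpose_mat V * V = (transpose_mat W * H) * (H * W)"
      using VtH unfolding V_def by simp
    also have "\<dots> = transpose_mat W * (H * (H * W))"
      using Wt H W by (simp add: assoc_mult_mat[of _ n n _ n _ n])
    also have "H * (H * W) = W" using H W HH by (simp add: assoc_mult_mat[of _ n n _ n _ n, symmetric])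
    finally show ?thesis using WW by simp
  qed
  have Adec: "A = V * mat_diag n d * transpose_mat V"
  proof -
    have "A = (H * H) * A * (H * H)" using HH A by simp
    also have "\<dots> = H * C * H" unfolding C_def using H A
      by (simp add: assoc_mult_mat[of _ n n _ n _ n])
    also have "\<dots> = H * (W * mat_diag n d * transpose_mat W) * H" using CW by simp
    also have "\<dots> = (H * W) * mat_diag n d * (transpose_mat W * H)"
    proof -
      have X: "W * (mat_diag n d * transpose_mat W) \<in> carrier_mat n n" using W Wt D by (metis mult_carrier_mat)
      have Y: "mat_diag n d * transpose_mat W \<in> carrier_mat n n" using Wt D by (metis mult_carrier_mat)
      show ?thesis using H W Wt D X Y by (simp add: assoc_mult_mat[of _ n n _ n _ n])
    qed
    finally show ?thesis unfolding V_def VtH[unfolded V_def] by simp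
  qed
  have sorted: "\<forall>i j. i \<le> j \<longrightarrow> j < n \<longrightarrow> d j \<le> d i"
  proof (intro allI impI)
    fix i j assume ij: "i \<le> j" "j < n"
    show "d j \<le> d i"
    proof (cases "j = 0")
      case True thus ?thesis using ij by simp
    next
      case False
      hence m0: "0 < m" using ij n_def by simp
      have "eigenvalue A (d 1)" by (rule decomp_eigen[OF V VV Adec], insert m0 n_def, simp)
      hence d1: "d' 0 \<le> lam" using maxle d_def by simp
      have "d' (j-1) \<le> d' 0" using d'sort ij n_def False by auto
      moreover have "i \<noteq> 0 \<Longrightarrow> d' (j-1) \<le> d' (i-1)" using d'sort ij n_def False by auto
      ultimately show ?thesis unfolding d_def using d1 False by auto
    qed
  qed
  show ?case using V VV Adec sorted unfolding n_def by blast
qed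

definition eigsys :: "real mat \<Rightarrow> nat \<Rightarrow> real mat \<Rightarrow> (nat \<Rightarrow> real) \<Rightarrow> bool" where
  "eigsys B m V d \<longleftrightarrow> B \<in> carrier_mat m m \<and> V \<in> carrier_mat m m \<and> transpose_mat V * V = 1\<^sub>m m \<and>
     B = V * mat_diag m (\<lambda>j. d (j+1)) * transpose_mat V \<and> (\<forall>i j. 1 \<le> i \<longrightarrow> i \<le> j \<longrightarrow> j \<le> m \<longrightarrow> d j \<le> d i)"

lemma sym_eig_eigsys:
  assumes B: "B \<in> carrier_mat m m" and sym: "transpose_mat B = B"
  shows "\<exists>V. eigsys B m V (sym_eig B)"
proof -
  from spectral_sorted[OF B sym] obtain d0 V where V: "V \<in> carrier_mat m m"
    and VV: "transpose_mat V * V = 1\<^sub>m m" and dec: "B = V * mat_diag m d0 * transpose_mat V"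
    and srt: "\<forall>i j. i \<le> j \<longrightarrow> j < m \<longrightarrow> d0 j \<le> d0 i" by blast
  define P where "P = (\<lambda>d. (\<forall>i j. 1 \<le> i \<longrightarrow> i \<le> j \<longrightarrow> j \<le> dim_row B \<longrightarrow> d j \<le> d i) \<and>
     (\<exists>V \<in> carrier_mat (dim_row B) (dim_row B).
        transpose_mat V * V = 1\<^sub>m (dim_row B) \<and>
        B = V * mat_diag (dim_row B) (\<lambda>j. d (j + 1)) * transpose_mat V))"
  have "P (\<lambda>j. d0 (j - 1))" unfolding P_def using B V VV dec srt
    by (auto intro!: bexI[of _ V])
  hence "P (sym_eig B)" unfolding sym_eig_def P_def[symmetric] by (rule someI[of P])
  thus ?thesis unfolding P_def eigsys_def using B by auto
qed

lemma eigsysD: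
  assumes "eigsys B m V d"
  shows "B \<in> carrier_mat m m" "V \<in> carrier_mat m m" "transpose_mat V * V = 1\<^sub>m m"
    "B = V * mat_diag m (\<lambda>j. d (j+1)) * transpose_mat V"
    "\<And>i j. 1 \<le> i \<Longrightarrow> i \<le> j \<Longrightarrow> j \<le> m \<Longrightarrow> d j \<le> d i"
    "V * transpose_mat V = 1\<^sub>m m"
  using assms unfolding eigsys_def
  by (auto intro: mat_mult_left_right_inverse[of "transpose_mat V" m V])

lemma mat_diag_dims[simp]: "dim_row (mat_diag m f) = m" "dim_col (mat_diag m f) = m"
  unfolding mat_diag_def by auto

lemma diag_mv:
  assumes w: "w \<in> carrier_vec m" and r: "r < m"
  shows "(mat_diag m f *\<^sub>v w) $ r = f r * w $ r"
proof -
  have "(mat_diag m f *\<^sub>v w) $ r = (\<Sum>k\<in>{0..<m}. (mat_diag m f) $$ (r,k) * w $ k)"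
    by (rule mv_entry[OF mat_diag_dim w r])
  also have "\<dots> = (\<Sum>k\<in>{0..<m}. if k = r then f r * w $ r else 0)"
    by (rule sum.cong, insert r, auto simp: mat_diag_def)
  finally show ?thesis using r by simp
qed

lemma eigsys_qf:
  assumes E: "eigsys B m V d" and x: "x \<in> carrier_vec m"
  shows "x \<bullet> (B *\<^sub>v x) = (\<Sum>r\<in>{0..<m}. d (r+1) * ((transpose_mat V *\<^sub>v x)$r)^2)"
    "(transpose_mat V *\<^sub>v x) \<bullet> (transpose_mat V *\<^sub>v x) = x \<bullet> x"
proof -
  note E' = eigsysD[OF E]
  have V: "V \<in> carrier_mat m m" and Vt: "transpose_mat V \<in> carrier_mat m m" using E' by auto
  have D: "mat_diag m (\<lambda>j. d (j+1)) \<in> carrier_mat m m" by simp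
  let ?w = "transpose_mat V *\<^sub>v x"
  have w: "?w \<in> carrier_vec m" using Vt x by simp
  have "B *\<^sub>v x = V *\<^sub>v (mat_diag m (\<lambda>j. d (j+1)) *\<^sub>v ?w)"
    using E'(4) V Vt D x by (simp add: assoc_mult_mat_vec[of _ m m _ m])
  moreover have Dw: "mat_diag m (\<lambda>j. d (j+1)) *\<^sub>v ?w \<in> carrier_vec m" using D w by (metis mult_mat_vec_carrier)
  ultimately have "x \<bullet> (B *\<^sub>v x) = ?w \<bullet> (mat_diag m (\<lambda>j. d (j+1)) *\<^sub>v ?w)"
    using transpose_vec_mult_scalar[OF V Dw x] by simp
  also have "\<dots> = (\<Sum>r\<in>{0..<m}. ?w$r * (d (r+1) * ?w$r))"
    unfolding scalar_prod_def using w diag_mv[OF w]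
    by (intro sum.cong, auto)
  also have "\<dots> = (\<Sum>r\<in>{0..<m}. d (r+1) * (?w$r)^2)"
    by (rule sum.cong, auto simp: power2_eq_square)
  finally show "x \<bullet> (B *\<^sub>v x) = (\<Sum>r\<in>{0..<m}. d (r+1) * (?w$r)^2)" .
  have "?w \<bullet> ?w = x \<bullet> (V *\<^sub>v ?w)"
    using transpose_vec_mult_scalar[OF V w x] by simp
  also have "V *\<^sub>v ?w = x" using E'(6) V Vt x by (simp add: assoc_mult_mat_vec[of _ m m _ m, symmetric])
  finally show "?w \<bullet> ?w = x \<bullet> x" .
qed

lemma sp_sum_sq: "(w::real vec) \<bullet> w = (\<Sum>r\<in>{0..<dim_vec w}. (w$r)^2)"
  unfolding scalar_prod_def by (simp add: power2_eq_square)

lemma sum_if_less: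
  fixes p m :: nat
  assumes "p \<le> m"
  shows "(\<Sum>r\<in>{0..<m}. if r < p then f r else 0) = (\<Sum>r\<in>{0..<p}. (f r :: real))"
proof -
  have "(\<Sum>r\<in>{0..<m}. if r < p then f r else 0) = (\<Sum>r\<in>{0..<p}. if r < p then f r else 0)"
    by (intro sum.mono_neutral_right) (use assms in auto)
  thus ?thesis by simp
qed

lemma cf_witness:
  assumes E: "eigsys B m V d" and p: "1 \<le> p" "p \<le> m"
  shows "\<exists>X. X = mat m p (\<lambda>(r,c). V$$(r,c)) \<and> X \<in> carrier_mat m p \<and> transpose_mat X * X = 1\<^sub>m p \<and>
     (\<forall>y \<in> carrier_vec p. d p * (y \<bullet> y) \<le> (X *\<^sub>v y) \<bullet> (B *\<^sub>v (X *\<^sub>v y)))"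
proof -
  note E' = eigsysD[OF E]
  have V: "V \<in> carrier_mat m m" using E' by auto
  define X where "X = mat m p (\<lambda>(r,c). V$$(r,c))"
  have X: "X \<in> carrier_mat m p" unfolding X_def by simp
  have VX: "transpose_mat V * X = mat m p (\<lambda>(r,c). if r = c then 1 else 0)"
  proof (rule eq_matI)
    fix r c assume "r < dim_row (mat m p (\<lambda>(r,c). if r = c then 1 else (0::real)))"
      "c < dim_col (mat m p (\<lambda>(r,c). if r = c then 1 else (0::real)))"
    hence r: "r < m" and c: "c < p" by auto
    have "(transpose_mat V * X) $$ (r,c) = (\<Sum>k\<in>{0..<m}. V$$(k,r) * X$$(k,c))"
      by (rule tt_entry[OF V X r c])
    also have "\<dots> = (\<Sum>k\<in>{0..<m}. V$$(k,r) * V$$(k,c))"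
      by (rule sum.cong, insert c p, auto simp: X_def)
    also have "\<dots> = (transpose_mat V * V) $$ (r,c)" using tt_entry[OF V V r, of c] c p by simp
    finally show "(transpose_mat V * X) $$ (r,c) = mat m p (\<lambda>(r,c). if r = c then 1 else 0) $$ (r,c)"
      using E'(3) r c p by simp
  qed (insert V X, auto)
  have XX: "transpose_mat X * X = 1\<^sub>m p"
  proof (rule eq_matI)
    fix a b assume "a < dim_row (1\<^sub>m p)" "b < dim_col (1\<^sub>m p)"
    hence a: "a < p" and b: "b < p" by auto
    have "(transpose_mat X * X) $$ (a,b) = (\<Sum>k\<in>{0..<m}. X$$(k,a) * X$$(k,b))"
      by (rule tt_entry[OF X X a b])
    also have "\<dots> = (\<Sum>k\<in>{0..<m}. V$$(k,a) * X$$(k,b))"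
      by (rule sum.cong, insert a p, auto simp: X_def)
    also have "\<dots> = (transpose_mat V * X) $$ (a,b)" using tt_entry[OF V X, of a b] a b p by simp
    finally show "(transpose_mat X * X) $$ (a,b) = 1\<^sub>m p $$ (a,b)" using VX a b p by simp
  qed (insert X, auto)
  have "d p * (y \<bullet> y) \<le> (X *\<^sub>v y) \<bullet> (B *\<^sub>v (X *\<^sub>v y))" if y: "y \<in> carrier_vec p" for y
  proof -
    let ?z = "X *\<^sub>v y"
    have z: "?z \<in> carrier_vec m" using X y by simp
    have w: "transpose_mat V *\<^sub>v ?z = (transpose_mat V * X) *\<^sub>v y"
      using V X y by (simp add: assoc_mult_mat_vec[of _ m m _ p])
    have wr: "(transpose_mat V *\<^sub>v ?z) $ r = (if r < p then y $ r else 0)" if r: "r < m" for r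
    proof -
      have "(transpose_mat V *\<^sub>v ?z) $ r = (\<Sum>c\<in>{0..<p}. (if r = c then 1 else 0) * y $ c)"
        unfolding w VX using mv_entry[of "mat m p (\<lambda>(r,c). if r = c then 1 else (0::real))" m p y r] r y by simp
      also have "\<dots> = (\<Sum>c\<in>{0..<p}. if c = r then y $ r else 0)" by (rule sum.cong, auto)
      finally show ?thesis by simp
    qed
    have "?z \<bullet> (B *\<^sub>v ?z) = (\<Sum>r\<in>{0..<m}. d (r+1) * ((transpose_mat V *\<^sub>v ?z)$r)^2)"
      by (rule eigsys_qf(1)[OF E z])
    also have "\<dots> = (\<Sum>r\<in>{0..<m}. if r < p then d (r+1) * (y$r)^2 else 0)"
      by (rule sum.cong, auto simp: wr)
    also have "\<dots> = (\<Sum>r\<in>{0..<p}. d (r+1) * (y$r)^2)"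
      using sum_if_less[OF p(2)] .
    also have "\<dots> \<ge> (\<Sum>r\<in>{0..<p}. d p * (y$r)^2)"
      by (rule sum_mono, rule mult_right_mono, rule E'(5), insert p, auto)
    finally have "(\<Sum>r\<in>{0..<p}. d p * (y$r)^2) \<le> ?z \<bullet> (B *\<^sub>v ?z)" .
    moreover have "(\<Sum>r\<in>{0..<p}. d p * (y$r)^2) = d p * (y \<bullet> y)"
      using y by (simp add: sp_sum_sq sum_distrib_left)
    ultimately show ?thesis by simp
  qed
  thus ?thesis using X XX X_def by blast
qed

lemma orth_norm:
  fixes X :: "real mat"
  assumes X: "X \<in> carrier_mat m p" and XX: "transpose_mat X * X = 1\<^sub>m p" and y: "y \<in> carrier_vec p"
  shows "(X *\<^sub>v y) \<bullet> (X *\<^sub>v y) = y \<bullet> y"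
proof -
  have Xy: "X *\<^sub>v y \<in> carrier_vec m" using X y by simp
  have "(X *\<^sub>v y) \<bullet> (X *\<^sub>v y) = (transpose_mat X *\<^sub>v (X *\<^sub>v y)) \<bullet> y"
    using transpose_vec_mult_scalar[OF X y Xy] by simp
  also have "transpose_mat X *\<^sub>v (X *\<^sub>v y) = y"
    using X y XX by (simp add: assoc_mult_mat_vec[of _ p m _ p, symmetric])
  finally show ?thesis .
qed

lemma cf_lower:
  assumes E: "eigsys B m V d" and p: "1 \<le> p" "p \<le> m" and X: "X \<in> carrier_mat m p"
    and XX: "transpose_mat X * X = 1\<^sub>m p"
    and H: "\<forall>y \<in> carrier_vec p. t * (y \<bullet> y) \<le> (X *\<^sub>v y) \<bullet> (B *\<^sub>v (X *\<^sub>v y))"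
  shows "t \<le> d p"
proof -
  note E' = eigsysD[OF E]
  have V: "V \<in> carrier_mat m m" using E' by auto
  have VtX: "transpose_mat V * X \<in> carrier_mat m p" using V X by (metis mult_carrier_mat transpose_carrier_mat)
  define K where "K = mat p p (\<lambda>(r,c). if r < p - 1 then (transpose_mat V * X) $$ (r,c) else 0)"
  have K: "K \<in> carrier_mat p p" unfolding K_def by simp
  have Kt: "transpose_mat K \<in> carrier_mat p p" using K by simp
  have "transpose_mat K *\<^sub>v unit_vec p (p-1) = 0\<^sub>v p"
  proof (rule eq_vecI)
    fix c assume "c < dim_vec (0\<^sub>v p :: real vec)"
    hence c: "c < p" by simp
    have "(transpose_mat K *\<^sub>v unit_vec p (p-1)) $ c = (\<Sum>r\<in>{0..<p}. (transpose_mat K)$$(c,r) * unit_vec p (p-1) $ r)"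
      by (rule mv_entry[OF Kt _ c], simp)
    also have "\<dots> = (\<Sum>r\<in>{0..<p}. 0)"
      by (rule sum.cong, insert c K p, auto simp: K_def unit_vec_def)
    finally show "(transpose_mat K *\<^sub>v unit_vec p (p-1)) $ c = 0\<^sub>v p $ c" using c by simp
  qed (insert Kt, simp)
  moreover have "unit_vec p (p-1) \<noteq> (0\<^sub>v p :: real vec)"
  proof
    assume "unit_vec p (p-1) = (0\<^sub>v p :: real vec)"
    hence "unit_vec p (p-1) $ (p-1) = (0\<^sub>v p :: real vec) $ (p-1)" by simp
    thus False using p by simp
  qed
  ultimately have "det (transpose_mat K) = 0"
    using det_0_iff_vec_prod_zero[OF Kt] by (metis unit_vec_carrier)
  hence "det K = 0" using det_transpose[OF K] by simp
  then obtain y where y: "y \<in> carrier_vec p" "y \<noteq> 0\<^sub>v p" and Ky: "K *\<^sub>v y = 0\<^sub>v p"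
    using det_0_iff_vec_prod_zero[OF K] by blast
  let ?z = "X *\<^sub>v y"
  let ?w = "transpose_mat V *\<^sub>v ?z"
  have z: "?z \<in> carrier_vec m" using X y by simp
  have w: "?w = (transpose_mat V * X) *\<^sub>v y"
    using V X y by (simp add: assoc_mult_mat_vec[of _ m m _ p])
  have w0: "?w $ r = 0" if r: "r < p - 1" for r
  proof -
    have rp: "r < p" using r by simp
    have "?w $ r = (\<Sum>c\<in>{0..<p}. (transpose_mat V * X) $$ (r,c) * y $ c)"
      unfolding w by (rule mv_entry[OF VtX y(1)], insert r p, simp)
    also have "\<dots> = (\<Sum>c\<in>{0..<p}. K $$ (r,c) * y $ c)"
      by (rule sum.cong, insert r, auto simp: K_def)
    also have "\<dots> = (K *\<^sub>v y) $ r" using mv_entry[OF K y(1) rp] by simp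
    finally show ?thesis using Ky rp by simp
  qed
  have zz: "?z \<bullet> ?z = y \<bullet> y" by (rule orth_norm[OF X XX y(1)])
  have "?z \<bullet> (B *\<^sub>v ?z) = (\<Sum>r\<in>{0..<m}. d (r+1) * (?w$r)^2)"
    by (rule eigsys_qf(1)[OF E z])
  also have "\<dots> \<le> (\<Sum>r\<in>{0..<m}. d p * (?w$r)^2)"
  proof (rule sum_mono)
    fix r assume r: "r \<in> {0..<m}"
    show "d (r+1) * (?w$r)^2 \<le> d p * (?w$r)^2"
    proof (cases "r < p - 1")
      case True thus ?thesis using w0 by simp
    next
      case False
      hence "d (r+1) \<le> d p" using E'(5)[of p "r+1"] p r by auto
      thus ?thesis by (simp add: mult_right_mono)
    qed
  qed
  also have "\<dots> = d p * (?w \<bullet> ?w)"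
    using V by (simp add: sp_sum_sq sum_distrib_left)
  also have "?w \<bullet> ?w = y \<bullet> y" using eigsys_qf(2)[OF E z] zz by simp
  finally have le: "?z \<bullet> (B *\<^sub>v ?z) \<le> d p * (y \<bullet> y)" .
  have "t * (y \<bullet> y) \<le> d p * (y \<bullet> y)" using H y(1) le by force
  moreover have "0 < y \<bullet> y" using self_sp_pos[OF y] .
  ultimately show ?thesis by simp
qed

lemma cs_sum:
  fixes a b :: "nat \<Rightarrow> real"
  shows "(\<Sum>i\<in>S. a i * b i)^2 \<le> (\<Sum>i\<in>S. (a i)^2) * (\<Sum>i\<in>S. (b i)^2)"
proof -
  define A where "A = (\<Sum>i\<in>S. (a i)^2)"
  define B where "B = (\<Sum>i\<in>S. (b i)^2)"
  define C where "C = (\<Sum>i\<in>S. a i * b i)"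
  have B0: "0 \<le> B" unfolding B_def by (rule sum_nonneg, simp)
  have "0 \<le> (\<Sum>i\<in>S. (a i * B - C * b i)^2)" by (rule sum_nonneg, simp)
  also have "(\<Sum>i\<in>S. (a i * B - C * b i)^2) = (\<Sum>i\<in>S. B*B * (a i)^2 - 2 * B * C * (a i * b i) + C * C * (b i)^2)"
    by (rule sum.cong, auto simp: power2_eq_square algebra_simps)
  also have "\<dots> = B*B*A - 2*B*C*C + C*C*B"
    unfolding A_def B_def C_def by (simp add: sum.distrib sum_subtractf sum_distrib_left)
  finally have ineq: "0 \<le> B * (A*B - C*C)" by (simp add: algebra_simps)
  show ?thesis
  proof (cases "B = 0")
    case True
    hence "\<forall>i\<in>S. b i = 0 \<or> infinite S" unfolding B_def
      using sum_nonneg_eq_0_iff[of S "\<lambda>i. (b i)^2"] by auto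
    hence "C = 0" unfolding C_def by (cases "finite S") auto
    thus ?thesis unfolding A_def[symmetric] B_def[symmetric] C_def[symmetric] using True by simp
  next
    case False
    hence "0 < B" using B0 by simp
    hence "0 \<le> A*B - C*C" using ineq by (simp add: zero_le_mult_iff)
    thus ?thesis unfolding A_def[symmetric] B_def[symmetric] C_def[symmetric] by (simp add: power2_eq_square algebra_simps)
  qed
qed

lemma cs_vec:
  fixes a b :: "real vec"
  assumes "a \<in> carrier_vec n" "b \<in> carrier_vec n"
  shows "(a \<bullet> b)^2 \<le> (a \<bullet> a) * (b \<bullet> b)"
  using cs_sum[of "\<lambda>i. a$i" "\<lambda>i. b$i" "{0..<n}"] assms
  by (simp add: scalar_prod_def power2_eq_square)

lemma cs_vec_abs:
  fixes a b :: "real vec"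
  assumes "a \<in> carrier_vec n" "b \<in> carrier_vec n"
  shows "\<bar>a \<bullet> b\<bar> \<le> sqrt (a \<bullet> a) * sqrt (b \<bullet> b)"
proof -
  have "\<bar>a \<bullet> b\<bar> = sqrt ((a \<bullet> b)^2)" by simp
  also have "\<dots> \<le> sqrt ((a \<bullet> a) * (b \<bullet> b))" using cs_vec[OF assms] by (rule real_sqrt_le_mono)
  also have "\<dots> = sqrt (a \<bullet> a) * sqrt (b \<bullet> b)" by (simp add: real_sqrt_mult)
  finally show ?thesis .
qed

lemma sp_zero_imp_zero:
  fixes x :: "real vec"
  assumes x: "x \<in> carrier_vec n" and xx: "x \<bullet> x = 0"
  shows "x = 0\<^sub>v n"
  using self_sp_pos[OF x] xx by auto

lemma spec_norm_bound:
  fixes M :: "real mat"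
  assumes M: "M \<in> carrier_mat r c" and nM: "spec_norm M \<le> 1" and x: "x \<in> carrier_vec c"
  shows "(M *\<^sub>v x) \<bullet> (M *\<^sub>v x) \<le> x \<bullet> x"
proof -
  define S where "S = {sqrt ((M *\<^sub>v v) \<bullet> (M *\<^sub>v v)) | v. v \<in> carrier_vec (dim_col M) \<and> v \<bullet> v = 1}"
  define F where "F = (\<Sum>i\<in>{0..<r}. row M i \<bullet> row M i)"
  have bnd: "(M *\<^sub>v v) \<bullet> (M *\<^sub>v v) \<le> F * (v \<bullet> v)" if v: "v \<in> carrier_vec c" for v
  proof -
    have "(M *\<^sub>v v) \<bullet> (M *\<^sub>v v) = (\<Sum>i\<in>{0..<r}. (row M i \<bullet> v)^2)"
      using M v by (simp add: scalar_prod_def[of "M *\<^sub>v v"] power2_eq_square)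
    also have "\<dots> \<le> (\<Sum>i\<in>{0..<r}. (row M i \<bullet> row M i) * (v \<bullet> v))"
      by (rule sum_mono, rule cs_vec[of _ c], insert M v, auto)
    also have "\<dots> = F * (v \<bullet> v)" unfolding F_def by (simp add: sum_distrib_right)
    finally show ?thesis .
  qed
  have bdd: "bdd_above S"
  proof (rule bdd_aboveI[of _ "sqrt F"])
    fix s assume "s \<in> S"
    then obtain v where v: "v \<in> carrier_vec c" "v \<bullet> v = 1" and s: "s = sqrt ((M *\<^sub>v v) \<bullet> (M *\<^sub>v v))"
      unfolding S_def using M by auto
    show "s \<le> sqrt F" unfolding s using bnd[OF v(1)] v(2) by simp
  qed
  show ?thesis
  proof (cases "x \<bullet> x = 0")
    case True
    hence "x = 0\<^sub>v c" using sp_zero_imp_zero[OF x] by simp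
    moreover have "M *\<^sub>v 0\<^sub>v c = 0\<^sub>v r" using M by (intro eq_vecI) (auto simp: scalar_prod_def)
    ultimately show ?thesis by simp
  next
    case False
    hence xpos: "0 < x \<bullet> x" using self_sp_nonneg[of x] by simp
    define s where "s = sqrt (x \<bullet> x)"
    have s0: "0 < s" unfolding s_def using xpos by simp
    define v where "v = (1/s) \<cdot>\<^sub>v x"
    have v: "v \<in> carrier_vec c" unfolding v_def using x by simp
    have vv: "v \<bullet> v = 1" unfolding v_def using x xpos s0
      by (simp add: s_def power2_eq_square[symmetric])
    have Mv: "M *\<^sub>v v = (1/s) \<cdot>\<^sub>v (M *\<^sub>v x)" unfolding v_def by (rule mult_mat_vec[OF M x])
    have "sqrt ((M *\<^sub>v v) \<bullet> (M *\<^sub>v v)) \<in> S" unfolding S_def using v vv M by auto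
    hence "sqrt ((M *\<^sub>v v) \<bullet> (M *\<^sub>v v)) \<le> Sup S" using bdd by (rule cSup_upper)
    also have "Sup S = spec_norm M" unfolding S_def spec_norm_def by simp
    finally have "sqrt ((M *\<^sub>v v) \<bullet> (M *\<^sub>v v)) \<le> 1" using nM by linarith
    hence le1: "(M *\<^sub>v v) \<bullet> (M *\<^sub>v v) \<le> 1" by simp
    have "(M *\<^sub>v v) \<bullet> (M *\<^sub>v v) = ((M *\<^sub>v x) \<bullet> (M *\<^sub>v x)) / (x \<bullet> x)"
      unfolding Mv using M x s0 by (simp add: s_def power2_eq_square[symmetric])
    thus ?thesis using le1 xpos by (simp add: divide_le_eq)
  qed
qed

lemma perturb_norm:
  fixes x m :: "real vec"
  assumes x: "x \<in> carrier_vec p" and m: "m \<in> carrier_vec p" and mm: "m \<bullet> m \<le> x \<bullet> x"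
    and e: "0 \<le> e" "e \<le> 1"
  shows "(1-e)^2 * (x \<bullet> x) \<le> (x + e \<cdot>\<^sub>v m) \<bullet> (x + e \<cdot>\<^sub>v m)"
proof -
  define a where "a = sqrt (x \<bullet> x)"
  define b where "b = sqrt (m \<bullet> m)"
  have a0: "0 \<le> a" and b0: "0 \<le> b" unfolding a_def b_def using self_sp_nonneg by auto
  have ba: "b \<le> a" unfolding a_def b_def using mm by simp
  have aa: "x \<bullet> x = a^2" unfolding a_def using self_sp_nonneg[of x] by simp
  have bb: "m \<bullet> m = b^2" unfolding b_def using self_sp_nonneg[of m] by simp
  have C: "- (a * b) \<le> x \<bullet> m" using cs_vec_abs[OF x m] unfolding a_def b_def by linarith
  have "(x + e \<cdot>\<^sub>v m) \<bullet> (x + e \<cdot>\<^sub>v m) = (\<Sum>i\<in>{0..<p}. (x$i + e * m$i) * (x$i + e * m$i))"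
    unfolding scalar_prod_def using x m by (intro sum.cong, auto)
  also have "\<dots> = (\<Sum>i\<in>{0..<p}. x$i * x$i) + 2 * e * (\<Sum>i\<in>{0..<p}. x$i * m$i) + e^2 * (\<Sum>i\<in>{0..<p}. m$i * m$i)"
    by (simp add: sum.distrib sum_distrib_left algebra_simps power2_eq_square)
  also have "\<dots> = x \<bullet> x + 2 * e * (x \<bullet> m) + e^2 * (m \<bullet> m)"
    using x m by (simp add: scalar_prod_def)
  finally have eq: "(x + e \<cdot>\<^sub>v m) \<bullet> (x + e \<cdot>\<^sub>v m) = a^2 + 2 * e * (x \<bullet> m) + e^2 * b^2"
    unfolding aa bb .
  have "a^2 + 2 * e * (x \<bullet> m) + e^2 * b^2 \<ge> a^2 - 2 * e * (a * b) + e^2 * b^2"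
    using mult_left_mono[OF C e(1)] by (simp add: algebra_simps)
  moreover have "a^2 - 2 * e * (a * b) + e^2 * b^2 = (a - e * b)^2" by (simp add: power2_eq_square algebra_simps)
  moreover have "(1 - e) * a \<le> a - e * b" using mult_left_mono[OF ba e(1)] by (simp add: algebra_simps)
  moreover have "0 \<le> (1 - e) * a" using e a0 by simp
  ultimately have "((1 - e) * a)^2 \<le> (x + e \<cdot>\<^sub>v m) \<bullet> (x + e \<cdot>\<^sub>v m)"
    unfolding eq by (metis power_mono order_trans)
  thus ?thesis unfolding aa by (simp add: power_mult_distrib)
qed

lemma sym_sp:
  fixes A :: "real mat"
  assumes A: "A \<in> carrier_mat n n" and sym: "transpose_mat A = A"
    and x: "x \<in> carrier_vec n" and y: "y \<in> carrier_vec n"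
  shows "x \<bullet> (A *\<^sub>v y) = y \<bullet> (A *\<^sub>v x)"
proof -
  have "x \<bullet> (A *\<^sub>v y) = (transpose_mat A *\<^sub>v x) \<bullet> y" using transpose_vec_mult_scalar[OF A y x] by simp
  also have "\<dots> = y \<bullet> (A *\<^sub>v x)" using sym comm_scalar_prod[of y n "A *\<^sub>v x"] A x y by simp
  finally show ?thesis .
qed

lemma psd_zero:
  fixes A :: "real mat"
  assumes A: "A \<in> carrier_mat n n" and sym: "transpose_mat A = A"
    and psd: "\<forall>v \<in> carrier_vec n. v \<bullet> (A *\<^sub>v v) \<ge> 0"
    and z: "z \<in> carrier_vec n" and zz: "z \<bullet> (A *\<^sub>v z) = 0"
  shows "A *\<^sub>v z = 0\<^sub>v n"
proof -
  define w where "w = A *\<^sub>v z"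
  have w: "w \<in> carrier_vec n" unfolding w_def using A z by simp
  define a where "a = w \<bullet> w"
  define b where "b = w \<bullet> (A *\<^sub>v w)"
  have b0: "0 \<le> b" unfolding b_def using psd w by simp
  have q: "0 \<le> 2 * t * a + t^2 * b" for t
  proof -
    let ?v = "z + t \<cdot>\<^sub>v w"
    have v: "?v \<in> carrier_vec n" using z w by simp
    have Av: "A *\<^sub>v ?v = A *\<^sub>v z + t \<cdot>\<^sub>v (A *\<^sub>v w)"
      using A z w by (simp add: mult_add_distrib_mat_vec[OF A] mult_mat_vec[OF A])
    have "?v \<bullet> (A *\<^sub>v ?v) = z \<bullet> (A *\<^sub>v z) + t * (z \<bullet> (A *\<^sub>v w)) + t * (w \<bullet> (A *\<^sub>v z)) + t * t * (w \<bullet> (A *\<^sub>v w))"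
      unfolding Av using A z w
      by (simp add: add_scalar_prod_distrib[of _ n] scalar_prod_add_distrib[of _ n] algebra_simps)
    also have "z \<bullet> (A *\<^sub>v w) = w \<bullet> (A *\<^sub>v z)" by (rule sym_sp[OF A sym z w])
    finally have "?v \<bullet> (A *\<^sub>v ?v) = 2 * t * a + t^2 * b"
      using zz unfolding a_def b_def w_def[symmetric] by (simp add: power2_eq_square)
    thus ?thesis using psd v by metis
  qed
  have "a = 0"
  proof (rule ccontr)
    assume "a \<noteq> 0"
    hence apos: "0 < a" unfolding a_def using self_sp_nonneg[of w] by simp
    define t where "t = - a / (b + 1)"
    have c: "b + 1 > 0" using b0 by simp
    have "t * b + 2 * a = a * (b + 2) / (b + 1)" unfolding t_def using c by (simp add: field_simps)
    also have "\<dots> > 0" using apos b0 c by simp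
    finally have p: "t * b + 2 * a > 0" .
    have tn: "t < 0" unfolding t_def using apos c by (simp add: divide_pos_pos)
    have "2 * t * a + t^2 * b = t * (t * b + 2 * a)" by (simp add: power2_eq_square algebra_simps)
    also have "\<dots> < 0" using p tn by (simp add: mult_neg_pos)
    finally show False using q[of t] by simp
  qed
  thus ?thesis using sp_zero_imp_zero[OF w] unfolding a_def w_def by simp
qed

definition penrose :: "real mat \<Rightarrow> real mat \<Rightarrow> bool" where
  "penrose B X \<longleftrightarrow> B * X * B = B \<and> X * B * X = X \<and> transpose_mat (B * X) = B * X \<and> transpose_mat (X * B) = X * B"

lemma penrose_unique:
  assumes B: "B \<in> carrier_mat k k" and X: "X \<in> carrier_mat k k" and Y: "Y \<in> carrier_mat k k"
    and PX: "penrose B X" and PY: "penrose B Y"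
  shows "X = Y"
proof -
  have Bt: "transpose_mat B \<in> carrier_mat k k" and Xt: "transpose_mat X \<in> carrier_mat k k"
    and Yt: "transpose_mat Y \<in> carrier_mat k k" using B X Y by auto
  note c = B X Y Bt Xt Yt
  note as = assoc_mult_mat[of _ k k _ k _ k]
  from PX have x1: "B * X * B = B" and x2: "X * B * X = X" and x3: "transpose_mat (B * X) = B * X"
    and x4: "transpose_mat (X * B) = X * B" unfolding penrose_def by auto
  from PY have y1: "B * Y * B = B" and y2: "Y * B * Y = Y" and y3: "transpose_mat (B * Y) = B * Y"
    and y4: "transpose_mat (Y * B) = Y * B" unfolding penrose_def by auto
  have s2: "B * X = transpose_mat X * transpose_mat B" using x3 transpose_mult[OF B X] by simp
  have s4: "transpose_mat Y * transpose_mat B = B * Y" using y3 transpose_mult[OF B Y] by simp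
  have s3: "transpose_mat B = transpose_mat B * (transpose_mat Y * transpose_mat B)"
  proof -
    have "transpose_mat B = transpose_mat (B * Y * B)" using y1 by simp
    also have "\<dots> = transpose_mat B * transpose_mat (B * Y)"
      using transpose_mult[of "B * Y" k k B k] B Y by simp
    also have "transpose_mat (B * Y) = transpose_mat Y * transpose_mat B" using transpose_mult[OF B Y] .
    finally show ?thesis .
  qed
  have X1: "X = X * (B * Y)"
  proof -
    have "X = X * (B * X)" using x2 c by (simp add: as)
    also have "\<dots> = X * (transpose_mat X * transpose_mat B)" using s2 by simp
    also have "\<dots> = X * (transpose_mat X * (transpose_mat B * (B * Y)))" using s3 s4 by simp
    also have "\<dots> = X * ((transpose_mat X * transpose_mat B) * (B * Y))" using c by (simp add: as)
    also have "\<dots> = X * ((B * X) * (B * Y))" using s2 by simp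
    also have "\<dots> = (X * B * X) * (B * Y)" using c by (simp add: as)
    also have "\<dots> = X * (B * Y)" using x2 by simp
    finally show ?thesis .
  qed
  have t2: "Y * B = transpose_mat B * transpose_mat Y" using y4 transpose_mult[OF Y B] by simp
  have t4: "transpose_mat B * transpose_mat X = X * B" using x4 transpose_mult[OF X B] by simp
  have t3: "transpose_mat B = (transpose_mat B * transpose_mat X) * transpose_mat B"
  proof -
    have "transpose_mat B = transpose_mat (B * X * B)" using x1 by simp
    also have "\<dots> = transpose_mat B * transpose_mat (B * X)"
      using transpose_mult[of "B * X" k k B k] B X by simp
    also have "transpose_mat (B * X) = transpose_mat X * transpose_mat B" using transpose_mult[OF B X] .
    finally show ?thesis using c by (simp add: as)
  qed
  have Y1: "Y = X * (B * Y)"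
  proof -
    have "Y = (Y * B) * Y" using y2 by simp
    also have "\<dots> = (transpose_mat B * transpose_mat Y) * Y" using t2 by simp
    also have "\<dots> = ((transpose_mat B * transpose_mat X) * transpose_mat B * transpose_mat Y) * Y"
      using t3 by simp
    also have "\<dots> = (X * B) * (transpose_mat B * transpose_mat Y) * Y" using t4 c by (simp add: as)
    also have "\<dots> = (X * B) * (Y * B) * Y" using t2 by simp
    also have "\<dots> = X * (B * (Y * B * Y))" using c by (simp add: as)
    also have "\<dots> = X * (B * Y)" using y2 by simp
    finally show ?thesis .
  qed
  show ?thesis using X1 Y1 by simp
qed

lemma diag_prod:
  fixes V :: "real mat"
  assumes V: "V \<in> carrier_mat k k" and VV: "transpose_mat V * V = 1\<^sub>m k"
  shows "(V * mat_diag k f * transpose_mat V) * (V * mat_diag k g * transpose_mat V) =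
    V * mat_diag k (\<lambda>j. f j * g j) * transpose_mat V"
proof -
  have Vt: "transpose_mat V \<in> carrier_mat k k" using V by simp
  have D: "mat_diag k f \<in> carrier_mat k k" and G: "mat_diag k g \<in> carrier_mat k k" by auto
  note as = assoc_mult_mat[of _ k k _ k _ k] mult_carrier_mat[of _ k k _ k]
  have "(V * mat_diag k f * transpose_mat V) * (V * mat_diag k g * transpose_mat V) =
     V * (mat_diag k f * ((transpose_mat V * V) * (mat_diag k g * transpose_mat V)))"
    using V Vt D G by (simp add: as)
  also have "\<dots> = V * (mat_diag k f * (mat_diag k g * transpose_mat V))"
    using VV V Vt D G by (simp add: as left_mult_one_mat[of _ k k])
  also have "mat_diag k f * (mat_diag k g * transpose_mat V) = (mat_diag k f * mat_diag k g) * transpose_mat V"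
    using assoc_mult_mat[OF D G Vt] by simp
  also have "\<dots> = mat_diag k (\<lambda>j. f j * g j) * transpose_mat V" by simp
  also have "V * \<dots> = V * mat_diag k (\<lambda>j. f j * g j) * transpose_mat V"
    using assoc_mult_mat[OF V _ Vt, of "mat_diag k (\<lambda>j. f j * g j)"] by simp
  finally show ?thesis .
qed

lemma diag_sym:
  fixes V :: "real mat"
  assumes V: "V \<in> carrier_mat k k"
  shows "transpose_mat (V * mat_diag k f * transpose_mat V) = V * mat_diag k f * transpose_mat V"
proof (rule eq_matI)
  fix i j assume "i < dim_row (V * mat_diag k f * transpose_mat V)" "j < dim_col (V * mat_diag k f * transpose_mat V)"
  hence i: "i < k" and j: "j < k" using V by auto
  show "transpose_mat (V * mat_diag k f * transpose_mat V) $$ (i,j) = (V * mat_diag k f * transpose_mat V) $$ (i,j)"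
  proof -
    have "(\<Sum>l\<in>{0..<k}. V$$(j,l) * f l * V$$(i,l)) = (\<Sum>l\<in>{0..<k}. V$$(i,l) * f l * V$$(j,l))"
      by (rule sum.cong) (auto simp: mult_ac)
    thus ?thesis using diag_entry[OF V V i j, of f] diag_entry[OF V V j i, of f] i j V by simp
  qed
qed (insert V, auto)

lemma pinv_penrose:
  assumes B: "B \<in> carrier_mat k k" and sym: "transpose_mat B = B"
  shows "pinv B \<in> carrier_mat k k" "penrose B (pinv B)" "transpose_mat (pinv B) = pinv B"
proof -
  from spectral_sorted[OF B sym] obtain d V where V: "V \<in> carrier_mat k k"
    and VV: "transpose_mat V * V = 1\<^sub>m k" and dec: "B = V * mat_diag k d * transpose_mat V" by blast
  define dp where "dp = (\<lambda>j. if d j = 0 then 0 else 1 / d j)"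
  define X0 where "X0 = V * mat_diag k dp * transpose_mat V"
  have X0: "X0 \<in> carrier_mat k k" unfolding X0_def using V by (metis mat_diag_dim mult_carrier_mat transpose_carrier_mat)
  have BX: "B * X0 = V * mat_diag k (\<lambda>j. d j * dp j) * transpose_mat V"
    unfolding dec X0_def by (rule diag_prod[OF V VV])
  have XB: "X0 * B = V * mat_diag k (\<lambda>j. dp j * d j) * transpose_mat V"
    unfolding dec X0_def by (rule diag_prod[OF V VV])
  have "B * X0 * B = V * mat_diag k (\<lambda>j. d j * dp j * d j) * transpose_mat V"
    unfolding BX by (subst dec, rule diag_prod[OF V VV])
  also have "(\<lambda>j. d j * dp j * d j) = d" unfolding dp_def by auto
  finally have p1: "B * X0 * B = B" using dec by simp
  have "X0 * B * X0 = V * mat_diag k (\<lambda>j. dp j * d j * dp j) * transpose_mat V"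
    unfolding XB by (subst X0_def, rule diag_prod[OF V VV])
  also have "(\<lambda>j. dp j * d j * dp j) = dp" unfolding dp_def by auto
  finally have p2: "X0 * B * X0 = X0" unfolding X0_def by simp
  have p3: "transpose_mat (B * X0) = B * X0" unfolding BX by (rule diag_sym[OF V])
  have p4: "transpose_mat (X0 * B) = X0 * B" unfolding XB by (rule diag_sym[OF V])
  have P0: "penrose B X0" unfolding penrose_def using p1 p2 p3 p4 by simp
  have ex: "\<exists>X. X \<in> carrier_mat (dim_col B) (dim_row B) \<and> B * X * B = B \<and> X * B * X = X \<and>
      transpose_mat (B * X) = B * X \<and> transpose_mat (X * B) = X * B"
    using X0 p1 p2 p3 p4 B by auto
  from someI_ex[OF ex] have P: "pinv B \<in> carrier_mat k k" "penrose B (pinv B)"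
    unfolding pinv_def[symmetric] penrose_def using B by auto
  show "pinv B \<in> carrier_mat k k" "penrose B (pinv B)" using P by auto
  have "pinv B = X0" by (rule penrose_unique[OF B P(1) X0 P(2) P0])
  thus "transpose_mat (pinv B) = pinv B" unfolding X0_def using diag_sym[OF V] by simp
qed

lemma pinv_range:
  assumes B: "B \<in> carrier_mat k k" and sym: "transpose_mat B = B"
    and Y: "Y \<in> carrier_mat k k" and PY: "penrose B Y" and Ysym: "transpose_mat Y = Y"
    and u: "u \<in> carrier_vec k" and perp: "\<forall>x \<in> carrier_vec k. B *\<^sub>v x = 0\<^sub>v k \<longrightarrow> u \<bullet> x = 0"
  shows "B *\<^sub>v (Y *\<^sub>v u) = u"
proof -
  note as = assoc_mult_mat[of _ k k _ k _ k]
  define P where "P = B * Y"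
  have P: "P \<in> carrier_mat k k" unfolding P_def using B Y by (metis mult_carrier_mat)
  from PY have y1: "B * Y * B = B" and y2: "Y * B * Y = Y" and y3: "transpose_mat (B * Y) = B * Y"
    and y4: "transpose_mat (Y * B) = Y * B" unfolding penrose_def by auto
  have PYB: "P = Y * B" unfolding P_def using y3 transpose_mult[OF B Y] sym Ysym by simp
  have BP: "B * P = B" unfolding PYB using y1 B Y by (simp add: as)
  have PP: "P * P = P" unfolding P_def using y1 B Y by (metis as mult_carrier_mat)
  have Pt: "transpose_mat P = P" unfolding P_def using y3 .
  define g where "g = u - P *\<^sub>v u"
  have Pu: "P *\<^sub>v u \<in> carrier_vec k" using P u by simp
  have g: "g \<in> carrier_vec k" unfolding g_def using u Pu by simp
  have "B *\<^sub>v g = B *\<^sub>v u - (B * P) *\<^sub>v u" unfolding g_def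
    using mult_minus_distrib_mat_vec[OF B u Pu] B P u by simp
  also have "\<dots> = 0\<^sub>v k" unfolding BP using B u by simp
  finally have "u \<bullet> g = 0" using perp g by simp
  moreover have "(P *\<^sub>v u) \<bullet> g = 0"
  proof -
    have "(P *\<^sub>v u) \<bullet> g = u \<bullet> (P *\<^sub>v g)"
      using transpose_vec_mult_scalar[OF P g u] Pt by simp
    also have "P *\<^sub>v g = P *\<^sub>v u - (P * P) *\<^sub>v u" unfolding g_def
      using mult_minus_distrib_mat_vec[OF P u Pu] P u by simp
    also have "\<dots> = 0\<^sub>v k" unfolding PP using P u by simp
    finally show ?thesis using u by simp
  qed
  ultimately have "g \<bullet> g = 0" unfolding g_def[of] using u Pu g
    by (simp add: minus_scalar_prod_distrib[of _ k])
  hence "g = 0\<^sub>v k" using sp_zero_imp_zero[OF g] by simp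
  hence g0: "g = 0\<^sub>v k" .
  have "P *\<^sub>v u = u"
  proof (rule eq_vecI)
    fix i assume "i < dim_vec u"
    hence i: "i < k" using u by simp
    have "g $ i = 0" using g0 i by simp
    thus "(P *\<^sub>v u) $ i = u $ i" unfolding g_def using u Pu P i by simp
  qed (use P u in simp)
  thus ?thesis unfolding P_def using B Y u by simp
qed

lemma qf_conj:
  fixes F G :: "real mat"
  assumes F: "F \<in> carrier_mat n k" and G: "G \<in> carrier_mat n n" and w: "w \<in> carrier_vec k"
  shows "w \<bullet> ((transpose_mat F * G * F) *\<^sub>v w) = (F *\<^sub>v w) \<bullet> (G *\<^sub>v (F *\<^sub>v w))"
proof -
  have Ft: "transpose_mat F \<in> carrier_mat k n" using F by simp
  have FG: "transpose_mat F * G \<in> carrier_mat k n" using Ft G by (metis mult_carrier_mat)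
  have v: "G *\<^sub>v (F *\<^sub>v w) \<in> carrier_vec n" using F G w by simp
  have "(transpose_mat F * G * F) *\<^sub>v w = transpose_mat F *\<^sub>v (G *\<^sub>v (F *\<^sub>v w))"
    using assoc_mult_mat_vec[OF FG F w] assoc_mult_mat_vec[OF Ft G, of "F *\<^sub>v w"] F w by simp
  hence "w \<bullet> ((transpose_mat F * G * F) *\<^sub>v w) = w \<bullet> (transpose_mat F *\<^sub>v (G *\<^sub>v (F *\<^sub>v w)))" by simp
  also have "\<dots> = (transpose_mat F *\<^sub>v (G *\<^sub>v (F *\<^sub>v w))) \<bullet> w"
    using comm_scalar_prod[OF w, of "transpose_mat F *\<^sub>v (G *\<^sub>v (F *\<^sub>v w))"] Ft v by simp
  also have "\<dots> = (G *\<^sub>v (F *\<^sub>v w)) \<bullet> (F *\<^sub>v w)" using transpose_vec_mult_scalar[OF F w v] .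
  also have "\<dots> = (F *\<^sub>v w) \<bullet> (G *\<^sub>v (F *\<^sub>v w))"
    using comm_scalar_prod[OF v, of "F *\<^sub>v w"] F w by simp
  finally show ?thesis .
qed

lemma qf_gram:
  fixes F :: "real mat"
  assumes F: "F \<in> carrier_mat n k" and w: "w \<in> carrier_vec k"
  shows "w \<bullet> ((transpose_mat F * F) *\<^sub>v w) = (F *\<^sub>v w) \<bullet> (F *\<^sub>v w)"
proof -
  have "transpose_mat F * F = transpose_mat F * 1\<^sub>m n * F" using F by simp
  thus ?thesis using qf_conj[OF F _ w, of "1\<^sub>m n"] F w by simp
qed

lemma qf_nys:
  fixes F Y :: "real mat"
  assumes F: "F \<in> carrier_mat n k" and Y: "Y \<in> carrier_mat k k" and z: "z \<in> carrier_vec n"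
  shows "z \<bullet> ((F * Y * transpose_mat F) *\<^sub>v z) = (transpose_mat F *\<^sub>v z) \<bullet> (Y *\<^sub>v (transpose_mat F *\<^sub>v z))"
proof -
  have Ft: "transpose_mat F \<in> carrier_mat k n" using F by simp
  have "F = transpose_mat (transpose_mat F)" by simp
  hence "F * Y * transpose_mat F = transpose_mat (transpose_mat F) * Y * transpose_mat F" by simp
  thus ?thesis using qf_conj[OF Ft Y z] by simp
qed

lemma orth_comp:
  fixes Q X :: "real mat"
  assumes Q: "Q \<in> carrier_mat n k" and QQ: "transpose_mat Q * Q = 1\<^sub>m k"
    and X: "X \<in> carrier_mat k p" and XX: "transpose_mat X * X = 1\<^sub>m p"
  shows "transpose_mat (Q * X) * (Q * X) = 1\<^sub>m p"
proof -
  have Qt: "transpose_mat Q \<in> carrier_mat k n" and Xt: "transpose_mat X \<in> carrier_mat p k" using Q X by auto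
  have "transpose_mat (Q * X) * (Q * X) = (transpose_mat X * transpose_mat Q) * (Q * X)"
    using transpose_mult[OF Q X] by simp
  also have "\<dots> = transpose_mat X * ((transpose_mat Q * Q) * X)"
    using Q X Qt Xt by (simp add: assoc_mult_mat[of _ p k _ n _ p] assoc_mult_mat[of _ k n _ k _ p] mult_carrier_mat[of _ k n _ k])
  also have "\<dots> = 1\<^sub>m p" using QQ X XX by simp
  finally show ?thesis .
qed

lemma quad_minus:
  fixes A :: "real mat"
  assumes A: "A \<in> carrier_mat n n" and sym: "transpose_mat A = A"
    and z: "z \<in> carrier_vec n" and w: "w \<in> carrier_vec n"
  shows "(z - w) \<bullet> (A *\<^sub>v (z - w)) = z \<bullet> (A *\<^sub>v z) - 2 * (w \<bullet> (A *\<^sub>v z)) + w \<bullet> (A *\<^sub>v w)"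
proof -
  have Az: "A *\<^sub>v z \<in> carrier_vec n" and Aw: "A *\<^sub>v w \<in> carrier_vec n" using A z w by auto
  have "A *\<^sub>v (z - w) = A *\<^sub>v z - A *\<^sub>v w" by (rule mult_minus_distrib_mat_vec[OF A z w])
  hence "(z - w) \<bullet> (A *\<^sub>v (z - w)) = z \<bullet> (A *\<^sub>v z) - z \<bullet> (A *\<^sub>v w) - (w \<bullet> (A *\<^sub>v z) - w \<bullet> (A *\<^sub>v w))"
    using z w Az Aw by (simp add: minus_scalar_prod_distrib[of _ n] scalar_prod_minus_distrib[of _ n])
  also have "z \<bullet> (A *\<^sub>v w) = w \<bullet> (A *\<^sub>v z)" by (rule sym_sp[OF A sym z w])
  finally show ?thesis by simp
qed

lemma U_qf:
  assumes E: "eigsys A n U lam" and w: "w \<in> carrier_vec n"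
  shows "(U *\<^sub>v w) \<bullet> (A *\<^sub>v (U *\<^sub>v w)) = (\<Sum>r\<in>{0..<n}. lam (r+1) * (w$r)^2)"
proof -
  note E' = eigsysD[OF E]
  have U: "U \<in> carrier_mat n n" using E' by simp
  have Uw: "U *\<^sub>v w \<in> carrier_vec n" using U w by simp
  have "transpose_mat U *\<^sub>v (U *\<^sub>v w) = w"
    using E'(3) U w by (simp add: assoc_mult_mat_vec[of _ n n _ n, symmetric])
  thus ?thesis using eigsys_qf(1)[OF E Uw] by simp
qed

lemma split_shift:
  fixes f :: "nat \<Rightarrow> real"
  assumes "k \<le> n"
  shows "(\<Sum>l\<in>{0..<n}. f l) = (\<Sum>l\<in>{0..<k}. f l) + (\<Sum>l\<in>{0..<n-k}. f (l+k))"
proof -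
  have "(\<Sum>l\<in>{0..<n}. f l) = (\<Sum>l\<in>{0..<k}. f l) + (\<Sum>l\<in>{k..<n}. f l)"
    using sum.atLeastLessThan_concat[of 0 k n f] assms by simp
  also have "(\<Sum>l\<in>{k..<n}. f l) = (\<Sum>l\<in>{0+k..<(n-k)+k}. f l)" using assms by simp
  also have "\<dots> = (\<Sum>l\<in>{0..<n-k}. f (l+k))" by (rule sum.shift_bounds_nat_ivl)
  finally show ?thesis .
qed

lemma transpose_sandwich:
  fixes F Y :: "real mat"
  assumes F: "F \<in> carrier_mat n k" and Y: "Y \<in> carrier_mat k k"
  shows "transpose_mat (F * Y * transpose_mat F) = F * transpose_mat Y * transpose_mat F"
proof -
  have FY: "F * Y \<in> carrier_mat n k" using F Y by (metis mult_carrier_mat)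
  have Ft: "transpose_mat F \<in> carrier_mat k n" using F by simp
  have "transpose_mat (F * Y * transpose_mat F) = F * transpose_mat (F * Y)"
    using transpose_mult[OF FY Ft] by simp
  also have "\<dots> = F * (transpose_mat Y * transpose_mat F)" using transpose_mult[OF F Y] by simp
  also have "\<dots> = F * transpose_mat Y * transpose_mat F"
    using assoc_mult_mat[of F n k "transpose_mat Y" k Ft n] F Y Ft by simp
  finally show ?thesis .
qed

lemma QUG_lemma:
  fixes U M N Q :: "real mat"
  assumes U: "U \<in> carrier_mat n n" and M: "M \<in> carrier_mat k k" and N: "N \<in> carrier_mat (n - k) k"
    and kn: "k \<le> n"
    and Q_eq: "Q = mat n k (\<lambda>(r, c). U $$ (r, c))
               + (e\<^sup>2 \<cdot>\<^sub>m (mat n k (\<lambda>(r, c). U $$ (r, c)) * M))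
               + (e \<cdot>\<^sub>m (mat n (n - k) (\<lambda>(r, c). U $$ (r, c + k)) * N))"
  shows "Q = U * mat n k (\<lambda>(r,c). if r < k then (if r = c then 1 else 0) + e\<^sup>2 * M$$(r,c) else e * N$$(r-k,c))"
proof -
  define G where "G = mat n k (\<lambda>(r,c). if r < k then (if r = c then 1 else 0) + e\<^sup>2 * M$$(r,c) else e * N$$(r-k,c))"
  define U1 where "U1 = mat n k (\<lambda>(r, c). U $$ (r, c))"
  define U2 where "U2 = mat n (n - k) (\<lambda>(r, c). U $$ (r, c + k))"
  have U1: "U1 \<in> carrier_mat n k" and U2: "U2 \<in> carrier_mat n (n-k)" and G: "G \<in> carrier_mat n k"
    unfolding U1_def U2_def G_def by auto
  have "Q = U * G"
  proof (rule eq_matI)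
    fix r c assume "r < dim_row (U * G)" "c < dim_col (U * G)"
    hence r: "r < n" and c: "c < k" using U G by auto
    have "(U1 * M) $$ (r,c) = (\<Sum>l\<in>{0..<k}. U$$(r,l) * M$$(l,c))"
      using mult_entry[OF U1 M r c] r kn by (intro trans[OF mult_entry[OF U1 M r c]] sum.cong) (auto simp: U1_def)
    moreover have "(U2 * N) $$ (r,c) = (\<Sum>l\<in>{0..<n-k}. U$$(r,l+k) * N$$(l,c))"
      using r by (intro trans[OF mult_entry[OF U2 N r c]] sum.cong) (auto simp: U2_def)
    ultimately have Qrc: "Q $$ (r,c) = U$$(r,c) + e\<^sup>2 * (\<Sum>l\<in>{0..<k}. U$$(r,l) * M$$(l,c))
        + e * (\<Sum>l\<in>{0..<n-k}. U$$(r,l+k) * N$$(l,c))"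
      unfolding Q_eq U1_def[symmetric] U2_def[symmetric] using U1 U2 M N r c kn
      by (simp add: U1_def)
    have "(U * G) $$ (r,c) = (\<Sum>l\<in>{0..<n}. U$$(r,l) * G$$(l,c))" by (rule mult_entry[OF U G r c])
    also have "\<dots> = (\<Sum>l\<in>{0..<k}. U$$(r,l) * G$$(l,c)) + (\<Sum>l\<in>{0..<n-k}. U$$(r,l+k) * G$$(l+k,c))"
      by (rule split_shift[OF kn])
    also have "(\<Sum>l\<in>{0..<k}. U$$(r,l) * G$$(l,c)) = (\<Sum>l\<in>{0..<k}. (if l = c then U$$(r,c) else 0) + e\<^sup>2 * (U$$(r,l) * M$$(l,c)))"
      by (rule sum.cong, insert kn c, auto simp: G_def algebra_simps)
    also have "\<dots> = U$$(r,c) + e\<^sup>2 * (\<Sum>l\<in>{0..<k}. U$$(r,l) * M$$(l,c))"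
      using c by (simp add: sum.distrib sum_distrib_left)
    also have "(\<Sum>l\<in>{0..<n-k}. U$$(r,l+k) * G$$(l+k,c)) = e * (\<Sum>l\<in>{0..<n-k}. U$$(r,l+k) * N$$(l,c))"
      unfolding sum_distrib_left by (rule sum.cong, insert kn c, auto simp: G_def algebra_simps)
    finally show "Q $$ (r,c) = (U * G) $$ (r,c)" using Qrc by simp
  next
    show "dim_row Q = dim_row (U * G)" "dim_col Q = dim_col (U * G)"
      unfolding Q_eq using U G N by auto
  qed
  thus ?thesis unfolding G_def .
qed

lemma nys_const:
  fixes l1 lk li e2 s :: real
  assumes l1: "0 < l1" and lk: "0 \<le> lk" "lk \<le> l1" and li: "0 < li" "li \<le> l1"
    and e: "0 \<le> e2" "e2 < 1" and s: "0 \<le> s"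
    and al: "0 < 1 - (3 * lk + 3 * e2 * (l1 - lk)) / li"
  shows "1 / (1 - e2)^2 \<le> ((l1 * (1 + e2) + lk * (1 + e2 / (1 + s))) / ((1 - (3 * lk + 3 * e2 * (l1 - lk)) / li) * li))^2"
proof -
  define aL where "aL = (1 - (3 * lk + 3 * e2 * (l1 - lk)) / li) * li"
  have aL_eq: "aL = li - 3 * lk - 3 * (e2 * l1) + 3 * (e2 * lk)" unfolding aL_def using li
    by (simp add: field_simps)
  have aL0: "0 < aL" unfolding aL_def using al li by simp
  define Num where "Num = l1 * (1 + e2) + lk * (1 + e2 / (1 + s))"
  have "0 \<le> lk * (1 + e2 / (1 + s))" using lk e s by simp
  hence N1: "l1 * (1 + e2) \<le> Num" unfolding Num_def by simp
  have D: "0 < 1 - e2" using e by simp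
  have p1: "e2 * lk \<le> lk" using mult_right_mono[of e2 1 lk] e lk by simp
  have p2: "e2 * e2 \<le> 3 * e2" using mult_right_mono[of e2 3 e2] e by simp
  have p3: "l1 * (e2 * e2) \<le> l1 * (3 * e2)" using mult_left_mono[OF p2] l1 by simp
  have key: "aL \<le> l1 * (1 + e2) * (1 - e2)"
  proof -
    have "l1 * (1 + e2) * (1 - e2) = l1 - l1 * (e2 * e2)" by (simp add: algebra_simps)
    thus ?thesis using aL_eq p1 p3 li lk by (simp add: algebra_simps)
  qed
  also have "\<dots> \<le> Num * (1 - e2)" using mult_right_mono[OF N1] D by simp
  finally have key2: "aL \<le> Num * (1 - e2)" .
  have "1 / (1 - e2) \<le> Num / aL" using key2 D aL0 by (simp add: field_simps)
  hence "(1 / (1 - e2))^2 \<le> (Num / aL)^2" by (rule power_mono) (use D in simp)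
  thus ?thesis unfolding Num_def aL_def by (simp add: power_one_over)
qed

theorem theorem3p2:
  fixes n k :: nat and A U M N Q :: "real mat" and lam :: "nat \<Rightarrow> real"
    and \<epsilon> :: real and i :: nat
  assumes A_carrier: "A \<in> carrier_mat n n"
    and A_sym: "transpose_mat A = A"
    and A_psd: "\<forall>v \<in> carrier_vec n. v \<bullet> (A *\<^sub>v v) \<ge> 0"
    and U_carrier: "U \<in> carrier_mat n n"
    and U_orth: "transpose_mat U * U = 1\<^sub>m n"
    and A_eig: "A = U * mat_diag n (\<lambda>j. lam (j + 1)) * transpose_mat U"
    and lam_sorted: "\<forall>a b. 1 \<le> a \<longrightarrow> a \<le> b \<longrightarrow> b \<le> n \<longrightarrow> lam b \<le> lam a"
    and lam_nonneg: "lam n \<ge> 0"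
    and lam1_pos: "lam 1 > 0"
    and k_ge: "1 \<le> k" and k_lt: "k < n"
    and eps_ge: "0 \<le> \<epsilon>" and eps_lt: "\<epsilon> < 1"
    and M_carrier: "M \<in> carrier_mat k k"
    and N_carrier: "N \<in> carrier_mat (n - k) k"
    and M_norm: "spec_norm M \<le> 1"
    and N_norm: "spec_norm N \<le> 1"
    and Q_carrier: "Q \<in> carrier_mat n k"
    and Q_orth: "transpose_mat Q * Q = 1\<^sub>m k"
    and Q_eq: "Q = mat n k (\<lambda>(r, c). U $$ (r, c))
               + (\<epsilon>\<^sup>2 \<cdot>\<^sub>m (mat n k (\<lambda>(r, c). U $$ (r, c)) * M))
               + (\<epsilon> \<cdot>\<^sub>m (mat n (n - k) (\<lambda>(r, c). U $$ (r, c + k)) * N))"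
    and i_range: "1 \<le> i" "i \<le> k"
    and lam_i_pos: "lam i > 0"
    and alpha_pos: "1 - (3 * lam (k + 1) + 3 * \<epsilon>\<^sup>2 * (lam 1 - lam (k + 1))) / lam i > 0"
  shows
    "let \<alpha> = 1 - (3 * lam (k + 1) + 3 * \<epsilon>\<^sup>2 * (lam 1 - lam (k + 1))) / lam i;
         C_RR = 2 + \<epsilon>\<^sup>2 + lam (k + 1) / lam 1;
         C_Nys = ((lam 1 * (1 + \<epsilon>\<^sup>2)
                   + lam (k + 1) * (1 + \<epsilon>\<^sup>2 / (1 + sqrt (1 - \<epsilon>\<^sup>2))))
                  / (\<alpha> * lam i))\<^sup>2;
         AQ = A * Q;
         QAQ = transpose_mat Q * A * Q
     in C_RR \<le> 4
        \<and> \<bar>lam i - sing_val AQ i\<bar> \<le> \<bar>lam i - sym_eig QAQ i\<bar>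
        \<and> \<bar>lam i - sym_eig QAQ i\<bar> \<le> C_RR * \<epsilon>\<^sup>2 * lam 1
        \<and> \<bar>lam i - sym_eig (AQ * pinv QAQ * transpose_mat AQ) i\<bar>
            \<le> C_Nys * (\<epsilon>\<^sup>2 * lam (k + 1) + \<epsilon> ^ 4 * (lam 1 - lam (k + 1)))"
proof -
  define e2 where "e2 = \<epsilon>\<^sup>2"
  have "\<epsilon> * \<epsilon> < 1 * 1" by (rule mult_strict_mono) (use eps_ge eps_lt in auto)
  hence e2_0: "0 \<le> e2" and e2_1: "e2 < 1" unfolding e2_def by (auto simp: power2_eq_square)
  have e2_1': "e2 \<le> 1" using e2_1 by simp
  have kn: "k \<le> n" "k + 1 \<le> n" using k_lt by auto
  have i1: "1 \<le> i" and ik: "i \<le> k" and in': "i \<le> n" using i_range k_lt by auto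
  have lam_nn: "0 \<le> lam j" if "1 \<le> j" "j \<le> n" for j
    using lam_sorted lam_nonneg that by (meson order_trans le_refl)
  have lam_le1: "lam j \<le> lam 1" if "1 \<le> j" "j \<le> n" for j
    using lam_sorted that by auto
  have lk0: "0 \<le> lam (k+1)" and lk1: "lam (k+1) \<le> lam 1" using lam_nn lam_le1 kn by auto
  have li1: "lam i \<le> lam 1" using lam_le1 i1 in' by auto
  have EA: "eigsys A n U lam" unfolding eigsys_def using A_carrier U_carrier U_orth A_eig lam_sorted by auto
  have Qt: "transpose_mat Q \<in> carrier_mat k n" using Q_carrier by simp
  define B1 where "B1 = transpose_mat Q * A * Q"
  have B1: "B1 \<in> carrier_mat k k" unfolding B1_def using Q_carrier A_carrier Qt
    by (metis mult_carrier_mat)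
  have B1sym: "transpose_mat B1 = B1"
    unfolding B1_def using transpose_sandwich[OF Qt A_carrier] A_sym by simp
  have B1f: "w \<bullet> (B1 *\<^sub>v w) = (Q *\<^sub>v w) \<bullet> (A *\<^sub>v (Q *\<^sub>v w))" if "w \<in> carrier_vec k" for w
    unfolding B1_def by (rule qf_conj[OF Q_carrier A_carrier that])
  obtain V1 where E1: "eigsys B1 k V1 (sym_eig B1)" using sym_eig_eigsys[OF B1 B1sym] by blast
  define mu where "mu = sym_eig B1 i"
  obtain X1 where X1: "X1 \<in> carrier_mat k i" and X1X1: "transpose_mat X1 * X1 = 1\<^sub>m i"
    and X1w: "\<forall>y \<in> carrier_vec i. mu * (y \<bullet> y) \<le> (X1 *\<^sub>v y) \<bullet> (B1 *\<^sub>v (X1 *\<^sub>v y))"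
    using cf_witness[OF E1 i1 ik] unfolding mu_def by blast
  have QX1: "Q * X1 \<in> carrier_mat n i" using Q_carrier X1 by (metis mult_carrier_mat)
  have mu_le: "mu \<le> lam i"
  proof (rule cf_lower[OF EA i1 in' QX1 orth_comp[OF Q_carrier Q_orth X1 X1X1]], intro ballI)
    fix y :: "real vec" assume y: "y \<in> carrier_vec i"
    have "(Q * X1) *\<^sub>v y = Q *\<^sub>v (X1 *\<^sub>v y)" using Q_carrier X1 y by simp
    thus "mu * (y \<bullet> y) \<le> ((Q * X1) *\<^sub>v y) \<bullet> (A *\<^sub>v ((Q * X1) *\<^sub>v y))"
      using X1w[rule_format, OF y] B1f[of "X1 *\<^sub>v y"] X1 y by simp
  qed
  define G where "G = mat n k (\<lambda>(r,c). if r < k then (if r = c then 1 else 0) + \<epsilon>\<^sup>2 * M$$(r,c) else \<epsilon> * N$$(r-k,c))"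
  have G: "G \<in> carrier_mat n k" unfolding G_def by simp
  have QUG: "Q = U * G" unfolding G_def by (rule QUG_lemma[OF U_carrier M_carrier N_carrier kn(1) Q_eq])
  have Qv: "Q *\<^sub>v c = U *\<^sub>v (G *\<^sub>v c)" if "c \<in> carrier_vec k" for c
    unfolding QUG using U_carrier G that by simp
  have Gv_low: "(G *\<^sub>v c) $ r = c $ r + e2 * (M *\<^sub>v c) $ r" if c: "c \<in> carrier_vec k" and r: "r < k" for c r
  proof -
    have rn: "r < n" using r kn by simp
    have "(G *\<^sub>v c) $ r = (\<Sum>l\<in>{0..<k}. G$$(r,l) * c$l)" by (rule mv_entry[OF G c rn])
    also have "\<dots> = (\<Sum>l\<in>{0..<k}. ((if r = l then 1 else 0) + e2 * M$$(r,l)) * c$l)"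
      by (rule sum.cong, insert r rn, auto simp: G_def e2_def)
    also have "\<dots> = (\<Sum>l\<in>{0..<k}. (if l = r then c$r else 0) + e2 * (M$$(r,l) * c$l))"
      by (rule sum.cong, auto simp: algebra_simps)
    also have "\<dots> = (\<Sum>l\<in>{0..<k}. (if l = r then c$r else 0)) + e2 * (\<Sum>l\<in>{0..<k}. M$$(r,l) * c$l)"
      by (simp only: sum.distrib sum_distrib_left)
    also have "(\<Sum>l\<in>{0..<k}. M$$(r,l) * c$l) = (M *\<^sub>v c) $ r" using mv_entry[OF M_carrier c r] by simp
    finally show ?thesis using r by simp
  qed
  have Gv_high: "(G *\<^sub>v c) $ r = \<epsilon> * (N *\<^sub>v c) $ (r - k)" if c: "c \<in> carrier_vec k" and r: "k \<le> r" "r < n" for c r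
  proof -
    have rk: "r - k < n - k" using r by simp
    have "(G *\<^sub>v c) $ r = (\<Sum>l\<in>{0..<k}. G$$(r,l) * c$l)" by (rule mv_entry[OF G c r(2)])
    also have "\<dots> = (\<Sum>l\<in>{0..<k}. \<epsilon> * N$$(r-k,l) * c$l)"
      by (rule sum.cong, insert r, auto simp: G_def)
    also have "\<dots> = \<epsilon> * (N *\<^sub>v c) $ (r - k)"
      using mv_entry[OF N_carrier c rk] by (simp add: sum_distrib_left mult.assoc)
    finally show ?thesis .
  qed
  define Emb where "Emb = mat k i (\<lambda>(r,c). if r = c then 1 else (0::real))"
  have Emb: "Emb \<in> carrier_mat k i" unfolding Emb_def by simp
  have EmbEmb: "transpose_mat Emb * Emb = 1\<^sub>m i"
  proof (rule eq_matI)
    fix a b assume "a < dim_row (1\<^sub>m i)" "b < dim_col (1\<^sub>m i)"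
    hence a: "a < i" and b: "b < i" by auto
    have "(transpose_mat Emb * Emb) $$ (a,b) = (\<Sum>l\<in>{0..<k}. Emb$$(l,a) * Emb$$(l,b))"
      by (rule tt_entry[OF Emb Emb a b])
    also have "\<dots> = (\<Sum>l\<in>{0..<k}. if l = a then (if a = b then 1 else 0) else 0)"
      by (rule sum.cong, insert a b ik, auto simp: Emb_def)
    finally show "(transpose_mat Emb * Emb) $$ (a,b) = 1\<^sub>m i $$ (a,b)" using a b ik by simp
  qed (insert Emb, auto)
  have Embv: "(Emb *\<^sub>v y) $ r = (if r < i then y $ r else 0)" if y: "y \<in> carrier_vec i" and r: "r < k" for y r
  proof -
    have "(Emb *\<^sub>v y) $ r = (\<Sum>c\<in>{0..<i}. (if r = c then 1 else 0) * y $ c)"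
      using mv_entry[OF Emb y r] r by (simp add: Emb_def)
    also have "\<dots> = (\<Sum>c\<in>{0..<i}. if c = r then y $ r else 0)" by (rule sum.cong, auto)
    finally show ?thesis by simp
  qed
  have mu_ge: "lam i * (1 - e2)^2 \<le> mu"
    unfolding mu_def
  proof (rule cf_lower[OF E1 i1 ik Emb EmbEmb], intro ballI)
    fix y :: "real vec" assume y: "y \<in> carrier_vec i"
    define yt where "yt = Emb *\<^sub>v y"
    have yt: "yt \<in> carrier_vec k" unfolding yt_def using Emb y by simp
    have ytyt: "yt \<bullet> yt = y \<bullet> y" unfolding yt_def by (rule orth_norm[OF Emb EmbEmb y])
    define w where "w = G *\<^sub>v yt"
    have w: "w \<in> carrier_vec n" unfolding w_def using G yt by simp
    have form: "yt \<bullet> (B1 *\<^sub>v yt) = (\<Sum>r\<in>{0..<n}. lam (r+1) * (w$r)^2)"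
      using B1f[OF yt] Qv[OF yt] U_qf[OF EA w] unfolding w_def by simp
    have "(\<Sum>r\<in>{0..<i}. lam (r+1) * (w$r)^2) \<le> (\<Sum>r\<in>{0..<n}. lam (r+1) * (w$r)^2)"
      by (rule sum_mono2, insert in', auto intro!: mult_nonneg_nonneg lam_nn)
    moreover have "(\<Sum>r\<in>{0..<i}. lam i * (w$r)^2) \<le> (\<Sum>r\<in>{0..<i}. lam (r+1) * (w$r)^2)"
      by (rule sum_mono, rule mult_right_mono, rule lam_sorted[rule_format], insert in', auto)
    moreover
    define mv where "mv = vec i (\<lambda>r. (M *\<^sub>v yt) $ r)"
    have mv: "mv \<in> carrier_vec i" unfolding mv_def by simp
    define a where "a = y + e2 \<cdot>\<^sub>v mv"
    have a: "a \<in> carrier_vec i" unfolding a_def using y mv by simp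
    have ar: "a $ r = w $ r" if r: "r < i" for r
    proof -
      have rk: "r < k" using r ik by simp
      have "w $ r = yt $ r + e2 * (M *\<^sub>v yt) $ r" unfolding w_def by (rule Gv_low[OF yt rk])
      also have "yt $ r = y $ r" unfolding yt_def using Embv[OF y rk] r by simp
      finally show ?thesis unfolding a_def mv_def using r y by simp
    qed
    have "(\<Sum>r\<in>{0..<i}. lam i * (w$r)^2) = lam i * (a \<bullet> a)"
      using a ar by (simp add: sp_sum_sq sum_distrib_left)
    moreover have "(1 - e2)^2 * (y \<bullet> y) \<le> a \<bullet> a"
    proof -
      have "mv \<bullet> mv = (\<Sum>r\<in>{0..<i}. ((M *\<^sub>v yt) $ r)^2)" unfolding mv_def by (simp add: sp_sum_sq)
      also have "\<dots> \<le> (\<Sum>r\<in>{0..<k}. ((M *\<^sub>v yt) $ r)^2)" by (rule sum_mono2, insert ik, auto)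
      also have "\<dots> = (M *\<^sub>v yt) \<bullet> (M *\<^sub>v yt)" using M_carrier by (simp add: sp_sum_sq)
      also have "\<dots> \<le> yt \<bullet> yt" by (rule spec_norm_bound[OF M_carrier M_norm yt])
      finally have "mv \<bullet> mv \<le> y \<bullet> y" using ytyt by simp
      thus ?thesis unfolding a_def by (rule perturb_norm[OF y mv _ e2_0 e2_1'])
    qed
    ultimately have "lam i * (1 - e2)^2 * (y \<bullet> y) \<le> yt \<bullet> (B1 *\<^sub>v yt)"
      unfolding form using lam_nn[OF i1 in']
      by (smt (verit, ccfv_SIG) mult.assoc mult_left_mono)
    thus "lam i * (1 - e2)^2 * (y \<bullet> y) \<le> (Emb *\<^sub>v y) \<bullet> (B1 *\<^sub>v (Emb *\<^sub>v y))"
      unfolding yt_def .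
  qed
  have mu0: "0 \<le> mu" using mu_ge lam_nn[OF i1 in'] by (smt (verit) zero_le_mult_iff zero_le_power2)
  have AQ: "A * Q \<in> carrier_mat n k" using A_carrier Q_carrier by (metis mult_carrier_mat)
  define B2 where "B2 = transpose_mat (A * Q) * (A * Q)"
  have B2: "B2 \<in> carrier_mat k k" unfolding B2_def using AQ by (metis mult_carrier_mat transpose_carrier_mat)
  have B2sym: "transpose_mat B2 = B2" unfolding B2_def
    using transpose_mult[of "transpose_mat (A * Q)" k n "A * Q" k] AQ by simp
  have B2f: "w \<bullet> (B2 *\<^sub>v w) = (A *\<^sub>v (Q *\<^sub>v w)) \<bullet> (A *\<^sub>v (Q *\<^sub>v w))" if w: "w \<in> carrier_vec k" for w
    unfolding B2_def using qf_gram[OF AQ w] A_carrier Q_carrier w by simp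
  obtain V2 where E2: "eigsys B2 k V2 (sym_eig B2)" using sym_eig_eigsys[OF B2 B2sym] by blast
  define nu where "nu = sym_eig B2 i"
  have nu_ge: "mu^2 \<le> nu"
    unfolding nu_def
  proof (rule cf_lower[OF E2 i1 ik X1 X1X1], intro ballI)
    fix y :: "real vec" assume y: "y \<in> carrier_vec i"
    define z where "z = Q *\<^sub>v (X1 *\<^sub>v y)"
    have X1y: "X1 *\<^sub>v y \<in> carrier_vec k" using X1 y by simp
    have z: "z \<in> carrier_vec n" unfolding z_def using Q_carrier X1y by simp
    have Az: "A *\<^sub>v z \<in> carrier_vec n" using A_carrier z by simp
    have zz: "z \<bullet> z = y \<bullet> y" unfolding z_def
      using orth_norm[OF Q_carrier Q_orth X1y] orth_norm[OF X1 X1X1 y] by simp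
    have f1: "mu * (y \<bullet> y) \<le> z \<bullet> (A *\<^sub>v z)"
      using X1w[rule_format, OF y] B1f[OF X1y] unfolding z_def by simp
    have f2: "(X1 *\<^sub>v y) \<bullet> (B2 *\<^sub>v (X1 *\<^sub>v y)) = (A *\<^sub>v z) \<bullet> (A *\<^sub>v z)"
      using B2f[OF X1y] unfolding z_def .
    have yy0: "0 \<le> y \<bullet> y" by (rule self_sp_nonneg)
    have cs: "(z \<bullet> (A *\<^sub>v z))^2 \<le> (z \<bullet> z) * ((A *\<^sub>v z) \<bullet> (A *\<^sub>v z))" by (rule cs_vec[OF z Az])
    have "(mu * (y \<bullet> y))^2 \<le> (z \<bullet> (A *\<^sub>v z))^2"
      by (rule power_mono[OF f1], insert mu0 yy0, simp)
    hence le: "(y \<bullet> y) * (mu^2 * (y \<bullet> y)) \<le> (y \<bullet> y) * ((A *\<^sub>v z) \<bullet> (A *\<^sub>v z))"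
      using cs zz by (simp add: power2_eq_square algebra_simps)
    show "mu^2 * (y \<bullet> y) \<le> (X1 *\<^sub>v y) \<bullet> (B2 *\<^sub>v (X1 *\<^sub>v y))"
    proof (cases "y \<bullet> y = 0")
      case True thus ?thesis unfolding f2 using self_sp_nonneg[of "A *\<^sub>v z"] by simp
    next
      case False
      hence "0 < y \<bullet> y" using yy0 by simp
      thus ?thesis unfolding f2 using le by simp
    qed
  qed
  have EAA: "eigsys (A * A) n U (\<lambda>j. (lam j)^2)"
  proof -
    have "A * A = U * mat_diag n (\<lambda>j. lam (j+1) * lam (j+1)) * transpose_mat U"
      using diag_prod[OF U_carrier U_orth] A_eig by metis
    moreover have "(lam j)^2 \<le> (lam i')^2" if "1 \<le> i'" "i' \<le> j" "j \<le> n" for i' j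
      using power_mono[OF lam_sorted[rule_format, of i' j] lam_nn[of j]] that by simp
    ultimately show ?thesis unfolding eigsys_def using A_carrier U_carrier U_orth
      by (auto simp: power2_eq_square mult_carrier_mat[of A n n A n])
  qed
  obtain X2 where X2: "X2 \<in> carrier_mat k i" and X2X2: "transpose_mat X2 * X2 = 1\<^sub>m i"
    and X2w: "\<forall>y \<in> carrier_vec i. nu * (y \<bullet> y) \<le> (X2 *\<^sub>v y) \<bullet> (B2 *\<^sub>v (X2 *\<^sub>v y))"
    using cf_witness[OF E2 i1 ik] unfolding nu_def by blast
  have QX2: "Q * X2 \<in> carrier_mat n i" using Q_carrier X2 by (metis mult_carrier_mat)
  have nu_le: "nu \<le> (lam i)^2"
  proof (rule cf_lower[OF EAA i1 in' QX2 orth_comp[OF Q_carrier Q_orth X2 X2X2]], intro ballI)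
    fix y :: "real vec" assume y: "y \<in> carrier_vec i"
    have X2y: "X2 *\<^sub>v y \<in> carrier_vec k" using X2 y by simp
    define z where "z = Q *\<^sub>v (X2 *\<^sub>v y)"
    have z: "z \<in> carrier_vec n" unfolding z_def using Q_carrier X2y by simp
    have Az: "A *\<^sub>v z \<in> carrier_vec n" using A_carrier z by simp
    have "(Q * X2) *\<^sub>v y = z" unfolding z_def using Q_carrier X2 y by simp
    moreover have "(A * A) *\<^sub>v z = A *\<^sub>v (A *\<^sub>v z)" using A_carrier z by simp
    moreover have "z \<bullet> (A *\<^sub>v (A *\<^sub>v z)) = (A *\<^sub>v z) \<bullet> (A *\<^sub>v z)"
      by (rule sym_sp[OF A_carrier A_sym z Az])
    ultimately show "nu * (y \<bullet> y) \<le> ((Q * X2) *\<^sub>v y) \<bullet> ((A * A) *\<^sub>v ((Q * X2) *\<^sub>v y))"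
      using X2w[rule_format, OF y] B2f[OF X2y] unfolding z_def by simp
  qed
  have sv: "sing_val (A * Q) i = sqrt nu" unfolding sing_val_def nu_def B2_def ..
  have sv_ge: "mu \<le> sqrt nu" using real_sqrt_le_mono[OF nu_ge] mu0 by simp
  have sv_le: "sqrt nu \<le> lam i" using real_sqrt_le_mono[OF nu_le] lam_nn[OF i1 in'] by simp
  define Y where "Y = pinv B1"
  have Y: "Y \<in> carrier_mat k k" and PY: "penrose B1 Y" and Ysym: "transpose_mat Y = Y"
    unfolding Y_def using pinv_penrose[OF B1 B1sym] by auto
  define F where "F = A * Q"
  have F: "F \<in> carrier_mat n k" unfolding F_def by (rule AQ)
  define Nys where "Nys = F * Y * transpose_mat F"
  have Nys: "Nys \<in> carrier_mat n n" unfolding Nys_def using F Y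
    by (metis mult_carrier_mat transpose_carrier_mat)
  have Nyssym: "transpose_mat Nys = Nys" unfolding Nys_def using transpose_sandwich[OF F Y] Ysym by simp
  have Ftz: "transpose_mat F *\<^sub>v z = transpose_mat Q *\<^sub>v (A *\<^sub>v z)" if z: "z \<in> carrier_vec n" for z
  proof -
    have "transpose_mat F = transpose_mat Q * A" unfolding F_def
      using transpose_mult[OF A_carrier Q_carrier] A_sym by simp
    thus ?thesis using Qt A_carrier z by simp
  qed
  have Nysf: "z \<bullet> (Nys *\<^sub>v z) = (transpose_mat F *\<^sub>v z) \<bullet> (Y *\<^sub>v (transpose_mat F *\<^sub>v z))"
    if z: "z \<in> carrier_vec n" for z
    unfolding Nys_def by (rule qf_nys[OF F Y z])
  have B1psd: "0 \<le> w \<bullet> (B1 *\<^sub>v w)" if w: "w \<in> carrier_vec k" for w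
    using B1f[OF w] A_psd Q_carrier w by simp
  have QtA: "(Q *\<^sub>v c) \<bullet> (A *\<^sub>v z) = c \<bullet> (transpose_mat Q *\<^sub>v (A *\<^sub>v z))"
    if c: "c \<in> carrier_vec k" and z: "z \<in> carrier_vec n" for c z
  proof -
    have Az: "A *\<^sub>v z \<in> carrier_vec n" using A_carrier z by simp
    have "(Q *\<^sub>v c) \<bullet> (A *\<^sub>v z) = (A *\<^sub>v z) \<bullet> (Q *\<^sub>v c)"
      using comm_scalar_prod[of "Q *\<^sub>v c" n "A *\<^sub>v z"] Q_carrier c Az by simp
    also have "\<dots> = (transpose_mat Q *\<^sub>v (A *\<^sub>v z)) \<bullet> c"
      using transpose_vec_mult_scalar[OF Q_carrier c Az] by simp
    also have "\<dots> = c \<bullet> (transpose_mat Q *\<^sub>v (A *\<^sub>v z))"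
      using comm_scalar_prod[of c k "transpose_mat Q *\<^sub>v (A *\<^sub>v z)"] Qt c Az by simp
    finally show ?thesis .
  qed
  have Nys_le: "z \<bullet> (Nys *\<^sub>v z) \<le> z \<bullet> (A *\<^sub>v z)" if z: "z \<in> carrier_vec n" for z
  proof -
    define u where "u = transpose_mat F *\<^sub>v z"
    have u: "u \<in> carrier_vec k" unfolding u_def using F z by simp
    have uQ: "u = transpose_mat Q *\<^sub>v (A *\<^sub>v z)" unfolding u_def by (rule Ftz[OF z])
    have Yu: "Y *\<^sub>v u \<in> carrier_vec k" using Y u by simp
    define v where "v = Q *\<^sub>v (Y *\<^sub>v u)"
    have v: "v \<in> carrier_vec n" unfolding v_def using Q_carrier Yu by simp
    have "0 \<le> (z - v) \<bullet> (A *\<^sub>v (z - v))" using A_psd z v by simp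
    also have "\<dots> = z \<bullet> (A *\<^sub>v z) - 2 * (v \<bullet> (A *\<^sub>v z)) + v \<bullet> (A *\<^sub>v v)"
      by (rule quad_minus[OF A_carrier A_sym z v])
    also have "v \<bullet> (A *\<^sub>v z) = (Y *\<^sub>v u) \<bullet> u" unfolding v_def using QtA[OF Yu z] uQ by simp
    also have "v \<bullet> (A *\<^sub>v v) = (Y *\<^sub>v u) \<bullet> (B1 *\<^sub>v (Y *\<^sub>v u))" unfolding v_def using B1f[OF Yu] by simp
    also have "\<dots> = u \<bullet> ((transpose_mat Y * B1 * Y) *\<^sub>v u)" using qf_conj[OF Y B1 u] by simp
    also have "transpose_mat Y * B1 * Y = Y" using PY Ysym unfolding penrose_def by simp
    also have "(Y *\<^sub>v u) \<bullet> u = u \<bullet> (Y *\<^sub>v u)" using comm_scalar_prod[OF Yu u] .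
    finally have "u \<bullet> (Y *\<^sub>v u) \<le> z \<bullet> (A *\<^sub>v z)" by simp
    thus ?thesis using Nysf[OF z] unfolding u_def by simp
  qed
  have Nys_ge: "z \<bullet> (A *\<^sub>v z) - (z - Q *\<^sub>v c) \<bullet> (A *\<^sub>v (z - Q *\<^sub>v c)) \<le> z \<bullet> (Nys *\<^sub>v z)"
    if z: "z \<in> carrier_vec n" and c: "c \<in> carrier_vec k" for z c
  proof -
    define u where "u = transpose_mat F *\<^sub>v z"
    have u: "u \<in> carrier_vec k" unfolding u_def using F z by simp
    have uQ: "u = transpose_mat Q *\<^sub>v (A *\<^sub>v z)" unfolding u_def by (rule Ftz[OF z])
    have Yu: "Y *\<^sub>v u \<in> carrier_vec k" using Y u by simp
    have perp: "\<forall>x \<in> carrier_vec k. B1 *\<^sub>v x = 0\<^sub>v k \<longrightarrow> u \<bullet> x = 0"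
    proof (intro ballI impI)
      fix x :: "real vec" assume x: "x \<in> carrier_vec k" and Bx: "B1 *\<^sub>v x = 0\<^sub>v k"
      have Qx: "Q *\<^sub>v x \<in> carrier_vec n" using Q_carrier x by simp
      have "(Q *\<^sub>v x) \<bullet> (A *\<^sub>v (Q *\<^sub>v x)) = 0" using B1f[OF x] Bx x by simp
      hence AQx: "A *\<^sub>v (Q *\<^sub>v x) = 0\<^sub>v n" by (rule psd_zero[OF A_carrier A_sym A_psd Qx])
      have "u \<bullet> x = x \<bullet> u" using comm_scalar_prod[OF u x] .
      also have "\<dots> = (Q *\<^sub>v x) \<bullet> (A *\<^sub>v z)" unfolding uQ using QtA[OF x z] by simp
      also have "\<dots> = z \<bullet> (A *\<^sub>v (Q *\<^sub>v x))" using sym_sp[OF A_carrier A_sym Qx z] by simp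
      also have "\<dots> = 0" unfolding AQx using z by simp
      finally show "u \<bullet> x = 0" .
    qed
    have BYu: "B1 *\<^sub>v (Y *\<^sub>v u) = u" by (rule pinv_range[OF B1 B1sym Y PY Ysym u perp])
    have "0 \<le> (c - Y *\<^sub>v u) \<bullet> (B1 *\<^sub>v (c - Y *\<^sub>v u))" using B1psd c Yu by simp
    also have "\<dots> = c \<bullet> (B1 *\<^sub>v c) - 2 * ((Y *\<^sub>v u) \<bullet> (B1 *\<^sub>v c)) + (Y *\<^sub>v u) \<bullet> (B1 *\<^sub>v (Y *\<^sub>v u))"
      by (rule quad_minus[OF B1 B1sym c Yu])
    also have "(Y *\<^sub>v u) \<bullet> (B1 *\<^sub>v c) = c \<bullet> u" using sym_sp[OF B1 B1sym Yu c] BYu by simp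
    also have "(Y *\<^sub>v u) \<bullet> (B1 *\<^sub>v (Y *\<^sub>v u)) = u \<bullet> (Y *\<^sub>v u)" unfolding BYu using comm_scalar_prod[OF Yu u] .
    finally have ineq: "2 * (c \<bullet> u) - c \<bullet> (B1 *\<^sub>v c) \<le> u \<bullet> (Y *\<^sub>v u)" by simp
    have Qc: "Q *\<^sub>v c \<in> carrier_vec n" using Q_carrier c by simp
    have "z \<bullet> (A *\<^sub>v z) - (z - Q *\<^sub>v c) \<bullet> (A *\<^sub>v (z - Q *\<^sub>v c)) =
       2 * ((Q *\<^sub>v c) \<bullet> (A *\<^sub>v z)) - (Q *\<^sub>v c) \<bullet> (A *\<^sub>v (Q *\<^sub>v c))"
      using quad_minus[OF A_carrier A_sym z Qc] by simp
    also have "(Q *\<^sub>v c) \<bullet> (A *\<^sub>v z) = c \<bullet> u" using QtA[OF c z] uQ by simp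
    also have "(Q *\<^sub>v c) \<bullet> (A *\<^sub>v (Q *\<^sub>v c)) = c \<bullet> (B1 *\<^sub>v c)" using B1f[OF c] by simp
    finally show ?thesis using ineq Nysf[OF z] unfolding u_def by simp
  qed
  obtain V3 where E3: "eigsys Nys n V3 (sym_eig Nys)" using sym_eig_eigsys[OF Nys Nyssym] by blast
  define om where "om = sym_eig Nys i"
  obtain X3 where X3: "X3 \<in> carrier_mat n i" and X3X3: "transpose_mat X3 * X3 = 1\<^sub>m i"
    and X3w: "\<forall>y \<in> carrier_vec i. om * (y \<bullet> y) \<le> (X3 *\<^sub>v y) \<bullet> (Nys *\<^sub>v (X3 *\<^sub>v y))"
    using cf_witness[OF E3 i1 in'] unfolding om_def by blast
  have om_le: "om \<le> lam i"
  proof (rule cf_lower[OF EA i1 in' X3 X3X3], intro ballI)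
    fix y :: "real vec" assume y: "y \<in> carrier_vec i"
    have "X3 *\<^sub>v y \<in> carrier_vec n" using X3 y by simp
    thus "om * (y \<bullet> y) \<le> (X3 *\<^sub>v y) \<bullet> (A *\<^sub>v (X3 *\<^sub>v y))"
      using X3w[rule_format, OF y] Nys_le by (meson order_trans)
  qed
  obtain X0 where X0def: "X0 = mat n i (\<lambda>(r,c). U$$(r,c))" and X0: "X0 \<in> carrier_mat n i"
    and X0X0: "transpose_mat X0 * X0 = 1\<^sub>m i"
    and X0w: "\<forall>y \<in> carrier_vec i. lam i * (y \<bullet> y) \<le> (X0 *\<^sub>v y) \<bullet> (A *\<^sub>v (X0 *\<^sub>v y))"
    using cf_witness[OF EA i1 in'] by blast
  define G1 where "G1 = mat k k (\<lambda>(r,c). G$$(r,c))"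
  have G1: "G1 \<in> carrier_mat k k" unfolding G1_def by simp
  have G1v: "G1 *\<^sub>v c = c + e2 \<cdot>\<^sub>v (M *\<^sub>v c)" if c: "c \<in> carrier_vec k" for c
  proof (rule eq_vecI)
    fix r assume "r < dim_vec (c + e2 \<cdot>\<^sub>v (M *\<^sub>v c))"
    hence r: "r < k" using c M_carrier by simp
    have rn: "r < n" using r kn by simp
    have "(G1 *\<^sub>v c) $ r = (\<Sum>l\<in>{0..<k}. G1$$(r,l) * c$l)" by (rule mv_entry[OF G1 c r])
    also have "\<dots> = (\<Sum>l\<in>{0..<k}. G$$(r,l) * c$l)" by (rule sum.cong, insert r, auto simp: G1_def)
    also have "\<dots> = (G *\<^sub>v c) $ r" using mv_entry[OF G c rn] by simp
    also have "\<dots> = c $ r + e2 * (M *\<^sub>v c) $ r" by (rule Gv_low[OF c r])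
    finally show "(G1 *\<^sub>v c) $ r = (c + e2 \<cdot>\<^sub>v (M *\<^sub>v c)) $ r" using r c M_carrier by simp
  qed (insert G1 c M_carrier, auto)
  have G1low: "(1 - e2)^2 * (c \<bullet> c) \<le> (G1 *\<^sub>v c) \<bullet> (G1 *\<^sub>v c)" if c: "c \<in> carrier_vec k" for c
    unfolding G1v[OF c]
    by (rule perturb_norm[OF c _ spec_norm_bound[OF M_carrier M_norm c] e2_0 e2_1'], insert M_carrier c, simp)
  have D0: "0 < (1 - e2)^2" using e2_1 by simp
  have "det G1 \<noteq> 0"
  proof
    assume "det G1 = 0"
    then obtain v where v: "v \<in> carrier_vec k" "v \<noteq> 0\<^sub>v k" and Gv: "G1 *\<^sub>v v = 0\<^sub>v k"
      using det_0_iff_vec_prod_zero[OF G1] by blast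
    have "(1 - e2)^2 * (v \<bullet> v) \<le> 0" using G1low[OF v(1)] Gv by simp
    moreover have "0 < (1 - e2)^2 * (v \<bullet> v)" using D0 self_sp_pos[OF v] by simp
    ultimately show False by simp
  qed
  from det_non_zero_imp_unit[OF G1 this, of "()"]
  obtain Gi where Gi: "Gi \<in> carrier_mat k k" and GGi: "G1 * Gi = 1\<^sub>m k"
    unfolding Units_def ring_mat_def by auto
  have om_ge: "lam i - e2 * lam (k+1) / (1 - e2)^2 \<le> om"
    unfolding om_def
  proof (rule cf_lower[OF E3 i1 in' X0 X0X0], intro ballI)
    fix y :: "real vec" assume y: "y \<in> carrier_vec i"
    define yt where "yt = Emb *\<^sub>v y"
    have yt: "yt \<in> carrier_vec k" unfolding yt_def using Emb y by simp
    have ytyt: "yt \<bullet> yt = y \<bullet> y" unfolding yt_def by (rule orth_norm[OF Emb EmbEmb y])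
    define c where "c = Gi *\<^sub>v yt"
    have c: "c \<in> carrier_vec k" unfolding c_def using Gi yt by simp
    have G1c: "G1 *\<^sub>v c = yt" unfolding c_def using G1 Gi yt GGi
      by (simp add: assoc_mult_mat_vec[of _ k k _ k, symmetric])
    have cc: "(1 - e2)^2 * (c \<bullet> c) \<le> y \<bullet> y" using G1low[OF c] G1c ytyt by simp
    have cc': "c \<bullet> c \<le> (y \<bullet> y) / (1 - e2)^2" using cc D0 by (simp add: field_simps)
    define yp where "yp = vec n (\<lambda>r. if r < i then y $ r else 0)"
    have yp: "yp \<in> carrier_vec n" unfolding yp_def by simp
    have z: "X0 *\<^sub>v y = U *\<^sub>v yp"
    proof (rule eq_vecI)
      fix r assume "r < dim_vec (U *\<^sub>v yp)"
      hence r: "r < n" using U_carrier by simp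
      have "(X0 *\<^sub>v y) $ r = (\<Sum>l\<in>{0..<i}. X0$$(r,l) * y$l)" by (rule mv_entry[OF X0 y r])
      also have "\<dots> = (\<Sum>l\<in>{0..<i}. U$$(r,l) * y$l)" by (rule sum.cong, insert r, auto simp: X0def)
      also have "\<dots> = (\<Sum>l\<in>{0..<n}. if l < i then U$$(r,l) * y$l else 0)" using sum_if_less[OF in'] by simp
      also have "\<dots> = (\<Sum>l\<in>{0..<n}. U$$(r,l) * yp$l)" by (rule sum.cong, auto simp: yp_def)
      also have "\<dots> = (U *\<^sub>v yp) $ r" using mv_entry[OF U_carrier yp r] by simp
      finally show "(X0 *\<^sub>v y) $ r = (U *\<^sub>v yp) $ r" .
    qed (insert X0 U_carrier, auto)
    have Gc: "G *\<^sub>v c \<in> carrier_vec n" using G c by simp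
    define wr where "wr = yp - G *\<^sub>v c"
    have wr: "wr \<in> carrier_vec n" unfolding wr_def using yp Gc by simp
    have zQc: "X0 *\<^sub>v y - Q *\<^sub>v c = U *\<^sub>v wr"
      unfolding z Qv[OF c] wr_def using mult_minus_distrib_mat_vec[OF U_carrier yp Gc] by simp
    have wr_low: "wr $ r = 0" if r: "r < k" for r
    proof -
      have rn: "r < n" using r kn by simp
      have "(G *\<^sub>v c) $ r = c $ r + e2 * (M *\<^sub>v c) $ r" by (rule Gv_low[OF c r])
      also have "\<dots> = (G1 *\<^sub>v c) $ r" using G1v[OF c] r c M_carrier by simp
      also have "\<dots> = (if r < i then y $ r else 0)" unfolding G1c yt_def by (rule Embv[OF y r])
      finally show ?thesis unfolding wr_def using rn yp Gc G by (simp add: yp_def)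
    qed
    have wr_high: "wr $ (l + k) = - (\<epsilon> * (N *\<^sub>v c) $ l)" if l: "l < n - k" for l
    proof -
      have ln: "l + k < n" and lk: "k \<le> l + k" using l by auto
      have "(G *\<^sub>v c) $ (l + k) = \<epsilon> * (N *\<^sub>v c) $ l" using Gv_high[OF c lk ln] by simp
      thus ?thesis unfolding wr_def using ln yp Gc G ik by (simp add: yp_def)
    qed
    have Nc: "N *\<^sub>v c \<in> carrier_vec (n - k)" using N_carrier c by simp
    have "(U *\<^sub>v wr) \<bullet> (A *\<^sub>v (U *\<^sub>v wr)) = (\<Sum>r\<in>{0..<n}. lam (r+1) * (wr$r)^2)"
      by (rule U_qf[OF EA wr])
    also have "\<dots> = (\<Sum>r\<in>{0..<k}. lam (r+1) * (wr$r)^2) + (\<Sum>l\<in>{0..<n-k}. lam (l+k+1) * (wr$(l+k))^2)"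
      by (rule split_shift[OF kn(1)])
    also have "(\<Sum>r\<in>{0..<k}. lam (r+1) * (wr$r)^2) = 0" using wr_low by simp
    also have "(\<Sum>l\<in>{0..<n-k}. lam (l+k+1) * (wr$(l+k))^2) = (\<Sum>l\<in>{0..<n-k}. lam (l+k+1) * (e2 * ((N *\<^sub>v c) $ l)^2))"
      by (rule sum.cong, auto simp: wr_high e2_def power_mult_distrib)
    also have "\<dots> \<le> (\<Sum>l\<in>{0..<n-k}. lam (k+1) * (e2 * ((N *\<^sub>v c) $ l)^2))"
      by (rule sum_mono, rule mult_right_mono, rule lam_sorted[rule_format], insert e2_0, auto)
    also have "\<dots> = lam (k+1) * e2 * (\<Sum>l\<in>{0..<n-k}. ((N *\<^sub>v c) $ l)^2)"
      by (simp add: sum_distrib_left mult.assoc)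
    also have "(\<Sum>l\<in>{0..<n-k}. ((N *\<^sub>v c) $ l)^2) = (N *\<^sub>v c) \<bullet> (N *\<^sub>v c)"
    proof -
      have dimNc: "dim_vec (N *\<^sub>v c) = n - k" using N_carrier by simp
      show ?thesis unfolding sp_sum_sq[of "N *\<^sub>v c"] dimNc ..
    qed
    also have "lam (k+1) * e2 * ((N *\<^sub>v c) \<bullet> (N *\<^sub>v c)) \<le> lam (k+1) * e2 * (c \<bullet> c)"
      by (rule mult_left_mono[OF spec_norm_bound[OF N_carrier N_norm c]], insert lk0 e2_0, simp)
    also have "\<dots> \<le> lam (k+1) * e2 * ((y \<bullet> y) / (1 - e2)^2)"
      by (rule mult_left_mono[OF cc'], insert lk0 e2_0, simp)
    finally have res: "(X0 *\<^sub>v y - Q *\<^sub>v c) \<bullet> (A *\<^sub>v (X0 *\<^sub>v y - Q *\<^sub>v c)) \<le> lam (k+1) * e2 * ((y \<bullet> y) / (1 - e2)^2)"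
      unfolding zQc by simp
    have X0y: "X0 *\<^sub>v y \<in> carrier_vec n" using X0 y by simp
    have "lam i * (y \<bullet> y) - lam (k+1) * e2 * ((y \<bullet> y) / (1 - e2)^2) \<le> (X0 *\<^sub>v y) \<bullet> (Nys *\<^sub>v (X0 *\<^sub>v y))"
      using X0w[rule_format, OF y] res Nys_ge[OF X0y c] by linarith
    thus "(lam i - e2 * lam (k+1) / (1 - e2)^2) * (y \<bullet> y) \<le> (X0 *\<^sub>v y) \<bullet> (Nys *\<^sub>v (X0 *\<^sub>v y))"
      by (simp add: algebra_simps)
  qed
  have fold1: "sym_eig (transpose_mat Q * A * Q) i = mu" by (simp add: mu_def B1_def)
  have fold2: "sym_eig (A * Q * pinv (transpose_mat Q * A * Q) * transpose_mat (A * Q)) i = om"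
    by (simp add: om_def Nys_def F_def Y_def B1_def)
  have lipos: "0 < lam i" by (rule lam_i_pos)
  have e4: "\<epsilon> ^ 4 = e2^2" unfolding e2_def by simp
  have c1: "2 + \<epsilon>\<^sup>2 + lam (k + 1) / lam 1 \<le> 4"
  proof -
    have "lam (k+1) / lam 1 \<le> 1" using lk1 lam1_pos by simp
    thus ?thesis using e2_1 unfolding e2_def by simp
  qed
  have c2: "\<bar>lam i - sqrt nu\<bar> \<le> \<bar>lam i - mu\<bar>" using sv_ge sv_le mu_le by simp
  have c3: "\<bar>lam i - mu\<bar> \<le> (2 + \<epsilon>\<^sup>2 + lam (k + 1) / lam 1) * \<epsilon>\<^sup>2 * lam 1"
  proof -
    have "\<bar>lam i - mu\<bar> = lam i - mu" using mu_le by simp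
    also have "\<dots> \<le> lam i - lam i * (1 - e2)^2" using mu_ge by simp
    also have "\<dots> = lam i * (2 * e2 - e2 * e2)" by (simp add: power2_eq_square algebra_simps)
    also have "\<dots> \<le> lam i * (2 * e2)" using lipos e2_0 by (simp add: mult_left_mono)
    also have "\<dots> \<le> lam 1 * (2 * e2)" using li1 e2_0 by (simp add: mult_right_mono)
    also have "\<dots> \<le> (2 + e2 + lam (k + 1) / lam 1) * e2 * lam 1"
    proof -
      have "0 \<le> (e2 + lam (k + 1) / lam 1) * e2 * lam 1" using e2_0 lk0 lam1_pos by simp
      thus ?thesis by (simp add: algebra_simps)
    qed
    finally show ?thesis unfolding e2_def .
  qed
  define CN where "CN = ((lam 1 * (1 + \<epsilon>\<^sup>2) + lam (k + 1) * (1 + \<epsilon>\<^sup>2 / (1 + sqrt (1 - \<epsilon>\<^sup>2))))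
                  / ((1 - (3 * lam (k + 1) + 3 * \<epsilon>\<^sup>2 * (lam 1 - lam (k + 1))) / lam i) * lam i))\<^sup>2"
  have CN: "1 / (1 - e2)^2 \<le> CN" unfolding CN_def e2_def
    by (rule nys_const[OF lam1_pos lk0 lk1 lipos li1 e2_0[unfolded e2_def] e2_1[unfolded e2_def] _ alpha_pos]) (use e2_1 in \<open>simp add: e2_def\<close>)
  have CN0: "0 \<le> CN" unfolding CN_def by simp
  have c4: "\<bar>lam i - om\<bar> \<le> CN * (\<epsilon>\<^sup>2 * lam (k + 1) + \<epsilon> ^ 4 * (lam 1 - lam (k + 1)))"
  proof -
    have "\<bar>lam i - om\<bar> = lam i - om" using om_le by simp
    also have "\<dots> \<le> e2 * lam (k+1) / (1 - e2)^2" using om_ge by simp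
    also have "\<dots> = (1 / (1 - e2)^2) * (e2 * lam (k+1))" by simp
    also have "\<dots> \<le> CN * (e2 * lam (k+1))" by (rule mult_right_mono[OF CN], insert e2_0 lk0, simp)
    also have "\<dots> \<le> CN * (e2 * lam (k+1) + e2^2 * (lam 1 - lam (k+1)))"
      by (rule mult_left_mono[OF _ CN0], insert lk1, simp)
    finally show ?thesis unfolding e4 unfolding e2_def .
  qed
  show ?thesis unfolding Let_def fold1 fold2 sv CN_def[symmetric] using c1 c2 c3 c4 by blast
qed

end
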